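(* Let $h_1,h_2,h_3$ be germs of holomorphic functions at the origin of $\mathbb C^2$ and let $a$ be a positive integer. Set $\omega_i=dy+y^a h_i(x,y)\,dx$ for $i=1,2,3$ and $h_{ij}=h_i-h_j$, and assume that $y$ does not divide $h_{ij}$ for $i\ne j$. Then the curvature of the $3$-web defined by $\omega_1\omega_2\omega_3=0$ is holomorphic along $\{y=0\}$ if and only if $y^a$ divides $$\frac{\partial}{\partial x}\left(\frac{h_{12}\,\partial_x h_{23}-h_{23}\,\partial_x h_{12}}{h_{12}\,h_{23}\,h_{31}}\right).$$
   Context: Holomorphy "along $\{y=0\}$" and divisibility by $y^a$ are understood at generic points of $\{y=0\}$ near the origin (the displayed function is meromorphic and holomorphic at generic points of $\{y=0\}$; $y^a$ divides it means its quotient by $y^a$ is holomorphic there). The curvature of a $3$-web given by $1$-forms $\omega_1,\omega_2,\omega_3$ is defined off the discriminant as follows: rescale the forms to $\tilde\omega_i$ with $\tilde\omega_1+\tilde\omega_2+\tilde\omega_3=0$; there is a unique $1$-form $\eta$ with $d\tilde\omega_i=\eta\wedge\tilde\omega_i$ for all $i$, and the curvature is the $2$-form $d\eta$ (independent of choices); it is meromorphic with poles in the discriminant. *)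

theory Defs
  imports "HOL-Analysis.Analysis"
begin

definition holo2 :: "(complex \<times> complex \<Rightarrow> complex) \<Rightarrow> (complex \<times> complex) set \<Rightarrow> bool" where
  "holo2 f N \<longleftrightarrow> open N \<and> (\<forall>z\<in>N. \<exists>D. (f has_derivative D) (at z) \<and>
       (\<forall>c u v. D (c * u, c * v) = c * D (u, v)))"

definition px :: "(complex \<times> complex \<Rightarrow> complex) \<Rightarrow> complex \<times> complex \<Rightarrow> complex" where
  "px f z = deriv (\<lambda>t. f (t, snd z)) (fst z)"

definition py :: "(complex \<times> complex \<Rightarrow> complex) \<Rightarrow> complex \<times> complex \<Rightarrow> complex" where
  "py f z = deriv (\<lambda>t. f (fst z, t)) (snd z)"

text \<open>A 1-form P dx + Q dy is represented by the pair (P, Q);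
  a 2-form R dx/\<and>dy by its coefficient R.\<close>
type_synonym form1 = "(complex \<times> complex \<Rightarrow> complex) \<times> (complex \<times> complex \<Rightarrow> complex)"
type_synonym form2 = "complex \<times> complex \<Rightarrow> complex"

definition ext_d :: "form1 \<Rightarrow> form2" where
  "ext_d w = (\<lambda>z. px (snd w) z - py (fst w) z)"

definition wedge :: "form1 \<Rightarrow> form1 \<Rightarrow> form2" where
  "wedge u w = (\<lambda>z. fst u z * snd w z - snd u z * fst w z)"

definition scale_form :: "(complex \<times> complex \<Rightarrow> complex) \<Rightarrow> form1 \<Rightarrow> form1" where
  "scale_form l w = ((\<lambda>z. l z * fst w z), (\<lambda>z. l z * snd w z))"

text \<open>K is the curvature of the 3-web given by w1, w2, w3 on the open set V
  (lying off the discriminant): locally on V one can rescale the forms by nonvanishing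
  holomorphic functions so that they sum to zero, there is a holomorphic 1-form eta
  with d(l_i w_i) = eta /\<and> (l_i w_i), and K = d eta.\<close>
definition web_curvature :: "(complex \<times> complex) set \<Rightarrow> form1 \<Rightarrow> form1 \<Rightarrow> form1 \<Rightarrow> form2 \<Rightarrow> bool" where
  "web_curvature V w1 w2 w3 K \<longleftrightarrow>
     (\<forall>p\<in>V. \<exists>N l1 l2 l3 eta. open N \<and> p \<in> N \<and> N \<subseteq> V \<and>
        holo2 l1 N \<and> holo2 l2 N \<and> holo2 l3 N \<and>
        holo2 (fst eta) N \<and> holo2 (snd eta) N \<and>
        (\<forall>z\<in>N. l1 z \<noteq> 0 \<and> l2 z \<noteq> 0 \<and> l3 z \<noteq> 0) \<and>
        (\<forall>z\<in>N. fst (scale_form l1 w1) z + fst (scale_form l2 w2) z + fst (scale_form l3 w3) z = 0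
              \<and> snd (scale_form l1 w1) z + snd (scale_form l2 w2) z + snd (scale_form l3 w3) z = 0) \<and>
        (\<forall>z\<in>N. ext_d (scale_form l1 w1) z = wedge eta (scale_form l1 w1) z
              \<and> ext_d (scale_form l2 w2) z = wedge eta (scale_form l2 w2) z
              \<and> ext_d (scale_form l3 w3) z = wedge eta (scale_form l3 w3) z) \<and>
        (\<forall>z\<in>N. K z = ext_d eta z))"

text \<open>A function F, given on the (dense open) set V, is holomorphic at generic points of
  {y=0} near the origin: for all x0 in a small disc outside a finite set, F agrees on V near
  (x0,0) with a function holomorphic in a neighbourhood of (x0,0).\<close>
definition holo_along_y0 :: "(complex \<times> complex) set \<Rightarrow> (complex \<times> complex \<Rightarrow> complex) \<Rightarrow> bool" where
  "holo_along_y0 V F \<longleftrightarrow> (\<exists>r>0. \<exists>S. finite S \<and> (\<forall>x0. cmod x0 < r \<and> x0 \<notin> S \<longrightarrow>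
      (\<exists>e>0. \<exists>g. holo2 g (ball (x0, 0) e) \<and> (\<forall>z\<in>ball (x0, 0) e \<inter> V. F z = g z))))"

definition ypow_dvd_along_y0 :: "nat \<Rightarrow> (complex \<times> complex) set \<Rightarrow> (complex \<times> complex \<Rightarrow> complex) \<Rightarrow> bool" where
  "ypow_dvd_along_y0 a V F \<longleftrightarrow> (\<exists>r>0. \<exists>S. finite S \<and> (\<forall>x0. cmod x0 < r \<and> x0 \<notin> S \<longrightarrow>
      (\<exists>e>0. \<exists>g. holo2 g (ball (x0, 0) e) \<and> (\<forall>z\<in>ball (x0, 0) e \<inter> V. F z = (snd z) ^ a * g z))))"

definition y_dvd_germ :: "(complex \<times> complex \<Rightarrow> complex) \<Rightarrow> bool" where
  "y_dvd_germ f \<longleftrightarrow> (\<exists>e>0. \<exists>g. holo2 g (ball 0 e) \<and> (\<forall>z\<in>ball 0 e. f z = snd z * g z))"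

end

theory Submission
  imports Defs "HOL-Complex_Analysis.Complex_Analysis"
begin


definition good :: "(complex \<times> complex \<Rightarrow> complex) \<Rightarrow> (complex \<times> complex) set \<Rightarrow> bool" where
  "good f N \<longleftrightarrow> open N \<and> continuous_on N f \<and>
     (\<forall>z\<in>N. (\<lambda>t. f (t, snd z)) field_differentiable at (fst z)) \<and>
     (\<forall>z\<in>N. (\<lambda>t. f (fst z, t)) field_differentiable at (snd z))"

lemma open_slice_x: "open N \<Longrightarrow> open {t. (t, y) \<in> N}"
proof -
  assume "open N"
  have "open ((\<lambda>t. (t, y)) -` N)"
    by (rule open_vimage[OF \<open>open N\<close>]) (auto intro!: continuous_intros)
  thus ?thesis by (simp add: vimage_def)
qed

lemma open_slice_y: "open N \<Longrightarrow> open {t. (x, t) \<in> N}"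
proof -
  assume "open N"
  have "open ((\<lambda>t. (x, t)) -` N)"
    by (rule open_vimage[OF \<open>open N\<close>]) (auto intro!: continuous_intros)
  thus ?thesis by (simp add: vimage_def)
qed

lemma good_slice_x_holo:
  assumes "good f N" shows "(\<lambda>t. f (t, y)) holomorphic_on {t. (t, y) \<in> N}"
  using assms unfolding good_def holomorphic_on_def
  by (metis field_differentiable_at_within fst_conv mem_Collect_eq snd_conv)

lemma good_slice_y_holo:
  assumes "good f N" shows "(\<lambda>t. f (x, t)) holomorphic_on {t. (x, t) \<in> N}"
  using assms unfolding good_def holomorphic_on_def
  by (metis field_differentiable_at_within fst_conv mem_Collect_eq snd_conv)

lemma good_slice_x_cont:
  assumes "good f N" "A \<subseteq> {t. (t, y) \<in> N}" shows "continuous_on A (\<lambda>t. f (t, y))"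
proof -
  have "continuous_on A ((\<lambda>z. f z) \<circ> (\<lambda>t. (t, y)))"
    apply (rule continuous_on_compose)
     apply (auto intro!: continuous_intros)
    using assms unfolding good_def by (auto intro: continuous_on_subset)
  thus ?thesis by (simp add: o_def)
qed

lemma good_slice_y_cont:
  assumes "good f N" "A \<subseteq> {t. (x, t) \<in> N}" shows "continuous_on A (\<lambda>t. f (x, t))"
proof -
  have "continuous_on A ((\<lambda>z. f z) \<circ> (\<lambda>t. (x, t)))"
    apply (rule continuous_on_compose)
     apply (auto intro!: continuous_intros)
    using assms unfolding good_def by (auto intro: continuous_on_subset)
  thus ?thesis by (simp add: o_def)
qed

lemma polydisc_in_open:
  assumes "open N" "(x0, y0) \<in> N"
  obtains R where "R > 0" "cball x0 (2*R) \<times> cball y0 (2*R) \<subseteq> N"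
proof -
  obtain e where e: "e > 0" "ball (x0, y0) e \<subseteq> N"
    using assms open_contains_ball by blast
  define R where "R = e / 5"
  have "cball x0 (2*R) \<times> cball y0 (2*R) \<subseteq> ball (x0, y0) e"
  proof
    fix z assume "z \<in> cball x0 (2*R) \<times> cball y0 (2*R)"
    then obtain x y where z: "z = (x, y)" "dist x0 x \<le> 2*R" "dist y0 y \<le> 2*R" by auto
    have "dist (x0, y0) (x, y) \<le> dist x0 x + dist y0 y"
      unfolding dist_Pair_Pair by (rule real_sqrt_sum_squares_triangle_ineq[where b=0 and d=0, simplified]
          | simp add: sqrt_sum_squares_le_sum_abs[of "dist x0 x" "dist y0 y", simplified])
    also have "\<dots> < e" using z e R_def by simp
    finally show "z \<in> ball (x0, y0) e" using z by simp
  qed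
  thus ?thesis using that[of R] e R_def by auto
qed

lemma local_x:
  assumes g: "good f N" and z0: "(x0, y0) \<in> N"
  obtains R B where "R > 0" "B \<ge> 0" "cball x0 R \<times> cball y0 R \<subseteq> N"
    "\<And>x x' y. x \<in> cball x0 R \<Longrightarrow> x' \<in> cball x0 R \<Longrightarrow> y \<in> cball y0 R \<Longrightarrow>
        cmod (f (x', y) - f (x, y) - px f (x, y) * (x' - x)) \<le> B * cmod (x' - x)^2"
    "\<And>x x' y. x \<in> cball x0 R \<Longrightarrow> x' \<in> cball x0 R \<Longrightarrow> y \<in> cball y0 R \<Longrightarrow>
        cmod (px f (x', y) - px f (x, y)) \<le> B * cmod (x' - x)"
proof -
  have oN: "open N" using g by (simp add: good_def)
  obtain R where R: "R > 0" "cball x0 (2*R) \<times> cball y0 (2*R) \<subseteq> N"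
    using polydisc_in_open[OF oN z0] by blast
  define P where "P = cball x0 (2*R) \<times> cball y0 (2*R)"
  have "compact P" unfolding P_def by (intro compact_Times compact_cball)
  moreover have "continuous_on P f" using g R(2) unfolding good_def P_def
    by (auto intro: continuous_on_subset)
  ultimately have "bounded (f ` P)" by (intro compact_imp_bounded compact_continuous_image)
  then obtain M where M: "M > 0" "\<And>z. z \<in> P \<Longrightarrow> cmod (f z) \<le> M"
    by (auto simp: bounded_pos)
  define B where "B = 2 * M / R^2"
  have B0: "B \<ge> 0" using M R by (simp add: B_def)
  have sub1: "cball x0 R \<times> cball y0 R \<subseteq> N"
    using R(2) by (rule order_trans[rotated]) (use R in \<open>auto simp: dist_commute\<close>)
  have main: "cmod (f (x', y) - f (x, y) - px f (x, y) * (x' - x)) \<le> B * cmod (x' - x)^2 \<and>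
        cmod (px f (x', y) - px f (x, y)) \<le> B * cmod (x' - x)"
    if xx: "x \<in> cball x0 R" "x' \<in> cball x0 R" and yy: "y \<in> cball y0 R" for x x' y
  proof -
    define S where "S = {t. (t, y) \<in> N}"
    define g0 where "g0 = (\<lambda>t. f (t, y))"
    have oS: "open S" unfolding S_def using open_slice_x[OF oN] .
    have hS: "g0 holomorphic_on S" unfolding g0_def S_def by (rule good_slice_x_holo[OF g])
    have h1S: "deriv g0 holomorphic_on S" using holomorphic_deriv[OF hS oS] .
    have h2S: "deriv (deriv g0) holomorphic_on S" using holomorphic_deriv[OF h1S oS] .
    have big: "cball x0 (2*R) \<subseteq> S"
    proof
      fix t assume "t \<in> cball x0 (2*R)"
      moreover have "y \<in> cball y0 (2*R)" using yy R by (auto simp: dist_commute)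
      ultimately show "t \<in> S" using R(2) unfolding S_def by auto
    qed
    have bnd: "cmod (deriv (deriv g0) u) \<le> B" if u: "u \<in> cball x0 R" for u
    proof -
      have cb: "cball u R \<subseteq> cball x0 (2*R)"
        using u by (intro cball_subset_cball_iff[THEN iffD2]) (auto simp: dist_commute)
      have "cmod ((deriv ^^ 2) g0 u) \<le> fact 2 * M / R ^ 2"
      proof (rule Cauchy_inequality)
        show "g0 holomorphic_on ball u R"
          using hS big cb ball_subset_cball by (meson holomorphic_on_subset order_trans)
        show "continuous_on (cball u R) g0"
          unfolding g0_def by (rule good_slice_x_cont[OF g]) (use big cb S_def in auto)
        show "0 < R" by fact
        fix t assume "cmod (u - t) = R"
        then have "t \<in> cball x0 (2*R)" using cb by (auto simp: dist_norm)
        moreover have "y \<in> cball y0 (2*R)" using yy R by (auto simp: dist_commute)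
        ultimately show "cmod (g0 t) \<le> M" unfolding g0_def using M(2)[of "(t,y)"] P_def by auto
      qed
      thus ?thesis by (simp add: B_def numeral_2_eq_2)
    qed
    have inS: "cball x0 R \<subseteq> S" using big R subset_cball[of R "2*R" x0] by auto
    have d0: "(g0 has_field_derivative deriv g0 t) (at t)" if "t \<in> S" for t
      using hS oS that holomorphic_derivI by blast
    have d1: "(deriv g0 has_field_derivative deriv (deriv g0) t) (at t)" if "t \<in> S" for t
      using h1S oS that holomorphic_derivI by blast
    define F where "F = (\<lambda>i::nat. if i = 0 then g0 else if i = 1 then deriv g0 else deriv (deriv g0))"
    have tay: "cmod (F 0 x' - (\<Sum>i\<le>1. F i x * (x' - x) ^ i / fact i)) \<le> B * cmod (x' - x) ^ Suc 1 / fact 1"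
    proof (rule complex_Taylor[of "cball x0 R"])
      show "convex (cball x0 R)" by simp
      fix i :: nat and t assume "t \<in> cball x0 R" "i \<le> 1"
      then have tS: "t \<in> S" using inS by auto
      show "(F i has_field_derivative F (Suc i) t) (at t within cball x0 R)"
      proof -
        have "i = 0 \<or> i = 1" using \<open>i \<le> 1\<close> by auto
        then show ?thesis
        proof
          assume "i = 0" then show ?thesis unfolding F_def
            using has_field_derivative_at_within[OF d0[OF tS]] by simp
        next
          assume "i = 1" then show ?thesis unfolding F_def
            using has_field_derivative_at_within[OF d1[OF tS]] by simp
        qed
      qed
    next
      fix t assume "t \<in> cball x0 R" then show "cmod (F (Suc 1) t) \<le> B" using bnd by (simp add: F_def)
    next
      show "x \<in> cball x0 R" by fact
    next
      show "x' \<in> cball x0 R" by fact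
    qed
    have lip: "cmod (deriv g0 x' - deriv g0 x) \<le> B * cmod (x' - x)"
    proof (rule field_differentiable_bound[of "cball x0 R"])
      fix t assume t: "t \<in> cball x0 R"
      then have tS: "t \<in> S" using inS by auto
      show "(deriv g0 has_field_derivative deriv (deriv g0) t) (at t within cball x0 R)"
        using has_field_derivative_at_within[OF d1[OF tS]] .
      show "cmod (deriv (deriv g0) t) \<le> B" using bnd t by simp
    qed (use xx in auto)
    have sm: "(\<Sum>i\<le>1. F i x * (x' - x) ^ i / fact i) = g0 x + deriv g0 x * (x' - x)"
      by (simp add: F_def)
    have "cmod (g0 x' - g0 x - deriv g0 x * (x' - x)) \<le> B * cmod (x' - x)^2"
      using tay unfolding sm by (simp add: F_def diff_diff_eq power2_eq_square)
    then show ?thesis using lip by (simp add: px_def g0_def)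
  qed
  show ?thesis
    by (rule that[OF R(1) B0 sub1]) (use main in auto)
qed


lemma px_y_holo:
  assumes g: "good f N" and z1: "(x1, y1) \<in> N"
  obtains R where "R > 0" "continuous_on (cball y1 R) (\<lambda>y. px f (x1, y))"
    "(\<lambda>y. px f (x1, y)) holomorphic_on ball y1 R"
proof -
  obtain R B where R: "R > 0" "B \<ge> 0" "cball x1 R \<times> cball y1 R \<subseteq> N"
    and tay: "\<And>x x' y. x \<in> cball x1 R \<Longrightarrow> x' \<in> cball x1 R \<Longrightarrow> y \<in> cball y1 R \<Longrightarrow>
        cmod (f (x', y) - f (x, y) - px f (x, y) * (x' - x)) \<le> B * cmod (x' - x)^2"
    and lip0: "\<And>x x' y. x \<in> cball x1 R \<Longrightarrow> x' \<in> cball x1 R \<Longrightarrow> y \<in> cball y1 R \<Longrightarrow>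
        cmod (px f (x', y) - px f (x, y)) \<le> B * cmod (x' - x)"
    by (rule local_x[OF g z1]) auto
  define d where "d = (\<lambda>n::nat. complex_of_real (R * inverse (real (Suc n))))"
  have dpos0: "R * inverse (real (Suc n)) > 0" for n using R by simp
  have dpos: "d n \<noteq> 0" for n using dpos0[of n] unfolding d_def of_real_eq_0_iff by linarith
  have dnorm: "cmod (d n) = R * inverse (real (Suc n))" for n
    using dpos0[of n] unfolding d_def norm_of_real by linarith
  have din: "x1 + d n \<in> cball x1 R" for n
  proof -
    have "inverse (real (Suc n)) \<le> 1" by (auto simp: inverse_le_1_iff)
    then have "R * inverse (real (Suc n)) \<le> R * 1" using R by (intro mult_left_mono) auto
    then show ?thesis by (simp add: dist_norm dnorm)
  qed
  define F where "F = (\<lambda>n y. (f (x1 + d n, y) - f (x1, y)) / d n)"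
  have oN: "open N" using g by (simp add: good_def)
  have ul: "uniform_limit (cball y1 R) F (\<lambda>y. px f (x1, y)) sequentially"
  proof (rule uniform_limitI)
    fix e :: real assume e: "e > 0"
    have "(\<lambda>n. B * R * inverse (real (Suc n))) \<longlonglongrightarrow> B * R * 0"
      by (intro tendsto_mult tendsto_const LIMSEQ_inverse_real_of_nat)
    then have "\<forall>\<^sub>F n in sequentially. B * R * inverse (real (Suc n)) < e"
      using e by (auto dest: order_tendstoD(2))
    then show "\<forall>\<^sub>F n in sequentially. \<forall>y\<in>cball y1 R. dist (F n y) (px f (x1, y)) < e"
    proof (rule eventually_mono)
      fix n assume n: "B * R * inverse (real (Suc n)) < e"
      show "\<forall>y\<in>cball y1 R. dist (F n y) (px f (x1, y)) < e"
      proof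
        fix y assume y: "y \<in> cball y1 R"
        have x1in: "x1 \<in> cball x1 R" using R by simp
        have "F n y - px f (x1, y) = (f (x1 + d n, y) - f (x1, y) - px f (x1, y) * (x1 + d n - x1)) / d n"
          using dpos[of n] by (simp add: F_def field_simps)
        then have "dist (F n y) (px f (x1, y)) = cmod (f (x1 + d n, y) - f (x1, y) - px f (x1, y) * (x1 + d n - x1)) / cmod (d n)"
          by (simp add: dist_norm norm_divide)
        also have "\<dots> \<le> B * cmod (d n)^2 / cmod (d n)"
          using tay[OF x1in din y] by (intro divide_right_mono) auto
        also have "\<dots> = B * cmod (d n)" using dpos[of n] by (simp add: power2_eq_square)
        also have "\<dots> < e" using n by (simp add: dnorm mult.assoc)
        finally show "dist (F n y) (px f (x1, y)) < e" .
      qed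
    qed
  qed
  have "continuous_on (cball y1 R) (\<lambda>y. px f (x1, y)) \<and> (\<lambda>y. px f (x1, y)) holomorphic_on ball y1 R"
  proof (rule holomorphic_uniform_limit[OF _ ul])
    show "\<forall>\<^sub>F n in sequentially. continuous_on (cball y1 R) (F n) \<and> F n holomorphic_on ball y1 R"
    proof (rule always_eventually, rule allI)
      fix n
      have s1: "cball y1 R \<subseteq> {t. (x1 + d n, t) \<in> N}" "cball y1 R \<subseteq> {t. (x1, t) \<in> N}"
        using R(3) din R by auto
      have c1: "continuous_on (cball y1 R) (\<lambda>t. f (x1 + d n, t))" by (rule good_slice_y_cont[OF g s1(1)])
      have c2: "continuous_on (cball y1 R) (\<lambda>t. f (x1, t))" by (rule good_slice_y_cont[OF g s1(2)])
      have h1: "(\<lambda>t. f (x1 + d n, t)) holomorphic_on ball y1 R"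
        using good_slice_y_holo[OF g] s1(1) ball_subset_cball holomorphic_on_subset by blast
      have h2: "(\<lambda>t. f (x1, t)) holomorphic_on ball y1 R"
        using good_slice_y_holo[OF g] s1(2) ball_subset_cball holomorphic_on_subset by blast
      show "continuous_on (cball y1 R) (F n) \<and> F n holomorphic_on ball y1 R"
        unfolding F_def using c1 c2 h1 h2 dpos[of n]
        by (auto intro!: continuous_intros holomorphic_intros)
    qed
  qed auto
  then show ?thesis using that R(1) by blast
qed

lemma px_cont:
  assumes g: "good f N" shows "continuous_on N (px f)"
proof -
  have "isCont (px f) z" if z: "z \<in> N" for z
  proof -
    obtain x1 y1 where z1: "z = (x1, y1)" by (cases z)
    have z1N: "(x1, y1) \<in> N" using z z1 by simp
    obtain R B where R: "R > 0" "B \<ge> 0" "cball x1 R \<times> cball y1 R \<subseteq> N"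
      and tay0: "\<And>x x' y. x \<in> cball x1 R \<Longrightarrow> x' \<in> cball x1 R \<Longrightarrow> y \<in> cball y1 R \<Longrightarrow>
        cmod (f (x', y) - f (x, y) - px f (x, y) * (x' - x)) \<le> B * cmod (x' - x)^2"
      and lip: "\<And>x x' y. x \<in> cball x1 R \<Longrightarrow> x' \<in> cball x1 R \<Longrightarrow> y \<in> cball y1 R \<Longrightarrow>
        cmod (px f (x', y) - px f (x, y)) \<le> B * cmod (x' - x)"
      by (rule local_x[OF g z1N]) auto
    obtain R2 where R2: "R2 > 0" "continuous_on (cball y1 R2) (\<lambda>y. px f (x1, y))"
      using px_y_holo[OF g z1N] by blast
    have ic: "isCont (\<lambda>y. px f (x1, y)) y1"
      by (rule continuous_on_interior[OF R2(2)]) (use R2 in simp)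
    show ?thesis unfolding continuous_at_eps_delta
    proof (intro allI impI)
      fix e :: real assume e: "e > 0"
      obtain d1 where d1: "d1 > 0" "\<And>y. dist y y1 < d1 \<Longrightarrow> dist (px f (x1, y)) (px f (x1, y1)) < e/2"
        using ic[unfolded continuous_at_eps_delta] e by (meson half_gt_zero)
      define d where "d = min (min d1 R) (e / (2 * (B + 1)))"
      have d: "d > 0" using d1 R e by (simp add: d_def)
      show "\<exists>d>0. \<forall>z'. dist z' z < d \<longrightarrow> dist (px f z') (px f z) < e"
      proof (intro exI conjI allI impI)
        fix z' assume z': "dist z' z < d"
        obtain x y where zz: "z' = (x, y)" by (cases z')
        have dx: "dist x x1 < d" and dy: "dist y y1 < d"
        proof -
          have "dist x x1 \<le> dist z' z" "dist y y1 \<le> dist z' z"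
            using zz z1 by (simp_all add: dist_Pair_Pair real_sqrt_sum_squares_ge1 real_sqrt_sum_squares_ge2)
          then show "dist x x1 < d" "dist y y1 < d" using z' by linarith+
        qed
        have xin: "x \<in> cball x1 R" and yin: "y \<in> cball y1 R" and x1in: "x1 \<in> cball x1 R"
          using dx dy R by (auto simp: d_def dist_commute)
        have "dist (px f z') (px f z) \<le> cmod (px f (x, y) - px f (x1, y)) + dist (px f (x1, y)) (px f (x1, y1))"
          using zz z1 by (simp add: dist_norm) (metis diff_add_cancel norm_triangle_ineq add.commute diff_add_eq)
        also have "\<dots> < B * cmod (x - x1) + e / 2"
          using lip[OF x1in xin yin] d1(2)[of y] dy by (intro add_le_less_mono) (auto simp: d_def)
        also have "B * cmod (x - x1) \<le> B * d" using dx R by (intro mult_left_mono) (auto simp: dist_norm)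
        also have "B * d \<le> B * (e / (2 * (B + 1)))" using R by (intro mult_left_mono) (auto simp: d_def)
        also have "B * (e / (2 * (B + 1))) \<le> e / 2" using R e by (simp add: field_simps)
        finally show "dist (px f z') (px f z) < e" by simp
      qed (rule d)
    qed
  qed
  then show ?thesis by (simp add: continuous_at_imp_continuous_on)
qed


definition swf :: "(complex \<times> complex \<Rightarrow> complex) \<Rightarrow> complex \<times> complex \<Rightarrow> complex" where
  "swf f = (\<lambda>z. f (snd z, fst z))"

definition swN :: "(complex \<times> complex) set \<Rightarrow> (complex \<times> complex) set" where
  "swN N = {z. (snd z, fst z) \<in> N}"

lemma swf_swf[simp]: "swf (swf f) = f" by (simp add: swf_def)
lemma swN_swN[simp]: "swN (swN N) = N" by (auto simp: swN_def)
lemma swf_app[simp]: "swf f (a, b) = f (b, a)" by (simp add: swf_def)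
lemma swN_mem[simp]: "(a, b) \<in> swN N \<longleftrightarrow> (b, a) \<in> N" by (simp add: swN_def)

lemma py_swf: "py f z = px (swf f) (snd z, fst z)"
  by (simp add: px_def py_def swf_def)

lemma py_swf_fun: "py f = swf (px (swf f))"
  by (rule ext) (simp add: py_swf swf_def)

lemma good_swap:
  assumes "good f N" shows "good (swf f) (swN N)"
proof -
  have oN: "open N" and cN: "continuous_on N f" using assms by (auto simp: good_def)
  have "open ((\<lambda>z. (snd z, fst z)) -` N)"
    by (rule open_vimage[OF oN]) (auto intro!: continuous_intros)
  then have o: "open (swN N)" by (simp add: swN_def vimage_def)
  have "continuous_on (swN N) (f \<circ> (\<lambda>z. (snd z, fst z)))"
    by (rule continuous_on_compose) (auto intro!: continuous_intros intro: continuous_on_subset[OF cN] simp: swN_def)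
  then have c: "continuous_on (swN N) (swf f)" by (simp add: swf_def o_def)
  show ?thesis using assms o c unfolding good_def
    by (auto simp: swf_def swN_def)
qed

lemma good_px:
  assumes g: "good f N" shows "good (px f) N"
proof -
  have oN: "open N" using g by (simp add: good_def)
  have c: "continuous_on N (px f)" by (rule px_cont[OF g])
  have sx: "(\<lambda>t. px f (t, snd z)) field_differentiable at (fst z)" if z: "z \<in> N" for z
  proof -
    obtain x y where zz: "z = (x, y)" by (cases z)
    have "deriv (\<lambda>t. f (t, y)) holomorphic_on {t. (t, y) \<in> N}"
      by (rule holomorphic_deriv[OF good_slice_x_holo[OF g] open_slice_x[OF oN]])
    moreover have "x \<in> {t. (t, y) \<in> N}" using z zz by simp
    ultimately have "deriv (\<lambda>t. f (t, y)) field_differentiable at x"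
      using holomorphic_on_imp_differentiable_at open_slice_x[OF oN] by blast
    then show ?thesis using zz by (simp add: px_def)
  qed
  have sy: "(\<lambda>t. px f (fst z, t)) field_differentiable at (snd z)" if z: "z \<in> N" for z
  proof -
    obtain x y where zz: "z = (x, y)" by (cases z)
    obtain R where R: "R > 0" "(\<lambda>t. px f (x, t)) holomorphic_on ball y R"
      using px_y_holo[OF g, of x y] z zz by blast
    then have "(\<lambda>t. px f (x, t)) field_differentiable at y"
      using holomorphic_on_imp_differentiable_at by (meson centre_in_ball open_ball)
    then show ?thesis using zz by simp
  qed
  show ?thesis unfolding good_def using oN c sx sy by blast
qed

lemma good_py:
  assumes g: "good f N" shows "good (py f) N"
proof -
  have "good (px (swf f)) (swN N)" by (rule good_px[OF good_swap[OF g]])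
  then have "good (swf (px (swf f))) (swN (swN N))" by (rule good_swap)
  then show ?thesis by (simp add: py_swf_fun)
qed

lemma osgood:
  assumes g: "good f N" shows "holo2 f N"
proof -
  have oN: "open N" using g by (simp add: good_def)
  have "\<exists>D. (f has_derivative D) (at z) \<and> (\<forall>c u v. D (c * u, c * v) = c * D (u, v))" if z: "z \<in> N" for z
  proof -
    obtain x0 y0 where z0: "z = (x0, y0)" by (cases z)
    have z0N: "(x0, y0) \<in> N" using z z0 by simp
    obtain R B where R: "R > 0" "B \<ge> 0" "cball x0 R \<times> cball y0 R \<subseteq> N"
      and tay: "\<And>x x' y. x \<in> cball x0 R \<Longrightarrow> x' \<in> cball x0 R \<Longrightarrow> y \<in> cball y0 R \<Longrightarrow>
        cmod (f (x', y) - f (x, y) - px f (x, y) * (x' - x)) \<le> B * cmod (x' - x)^2"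
      and lip: "\<And>x x' y. x \<in> cball x0 R \<Longrightarrow> x' \<in> cball x0 R \<Longrightarrow> y \<in> cball y0 R \<Longrightarrow>
        cmod (px f (x', y) - px f (x, y)) \<le> B * cmod (x' - x)"
      by (rule local_x[OF g z0N]) auto
    define A where "A = px f (x0, y0)"
    define Bp where "Bp = py f (x0, y0)"
    define D where "D = (\<lambda>w::complex\<times>complex. A * fst w + Bp * snd w)"
    have blD: "bounded_linear D" unfolding D_def
      by (intro bounded_linear_add bounded_linear_compose[OF bounded_linear_mult_right] bounded_linear_fst bounded_linear_snd)
    have "continuous_on N (px f)" by (rule px_cont[OF g])
    then have "isCont (px f) (x0, y0)" using z0N oN continuous_on_eq_continuous_at by blast
    then have icy: "isCont (\<lambda>y. px f (x0, y)) y0"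
      using isCont_o2[where f="\<lambda>y. (x0, y)" and a=y0 and g="px f"] by (simp add: continuous_intros)
    have dy: "((\<lambda>t. f (x0, t)) has_field_derivative Bp) (at y0)"
      using g z0N unfolding good_def Bp_def py_def
      by (metis DERIV_deriv_iff_field_differentiable fst_conv snd_conv)
    have "(f has_derivative D) (at (x0, y0))"
      unfolding has_derivative_at_alt
    proof (intro conjI blD allI impI)
      fix e :: real assume e: "e > 0"
      obtain d1 where d1: "d1 > 0" "\<And>y. dist y y0 < d1 \<Longrightarrow> dist (px f (x0, y)) A < e/3"
        using icy[unfolded continuous_at_eps_delta] e A_def by (meson divide_pos_pos zero_less_numeral)
      obtain d2 where d2: "d2 > 0" "\<And>t. norm (t - y0) < d2 \<Longrightarrow>
          norm (f (x0, t) - f (x0, y0) - Bp * (t - y0)) \<le> e/3 * norm (t - y0)"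
        using dy[unfolded has_field_derivative_def has_derivative_at_alt] e
        by (metis divide_pos_pos mult.commute zero_less_numeral)
      define d where "d = min (min d1 d2) (min R (e / (3 * (B + 1))))"
      have dpos: "d > 0" using d1 d2 R e by (simp add: d_def)
      show "\<exists>d>0. \<forall>w. norm (w - (x0, y0)) < d \<longrightarrow>
           norm (f w - f (x0, y0) - D (w - (x0, y0))) \<le> e * norm (w - (x0, y0))"
      proof (intro exI conjI allI impI)
        fix w assume w: "norm (w - (x0, y0)) < d"
        obtain x y where ww: "w = (x, y)" by (cases w)
        define n where "n = norm (w - (x0, y0))"
        have nx: "cmod (x - x0) \<le> n" and ny: "cmod (y - y0) \<le> n"
          unfolding n_def ww using norm_fst_le[of "x - x0" "y - y0"] norm_snd_le[of "y - y0" "x - x0"]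
          by auto
        have xin: "x \<in> cball x0 R" "x0 \<in> cball x0 R" and yin: "y \<in> cball y0 R"
          using nx ny w R unfolding n_def by (auto simp: d_def dist_norm norm_minus_commute)
        have eq: "f w - f (x0, y0) - D (w - (x0, y0)) =
           (f (x, y) - f (x0, y) - px f (x0, y) * (x - x0)) + (px f (x0, y) - A) * (x - x0)
           + (f (x0, y) - f (x0, y0) - Bp * (y - y0))"
          unfolding ww D_def by (simp add: algebra_simps)
        have t1: "cmod (f (x, y) - f (x0, y) - px f (x0, y) * (x - x0)) \<le> e/3 * n"
        proof -
          have "cmod (f (x, y) - f (x0, y) - px f (x0, y) * (x - x0)) \<le> B * cmod (x - x0)^2"
            by (rule tay[OF xin(2) xin(1) yin])
          also have "\<dots> \<le> B * (n * (e / (3 * (B + 1))))"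
          proof -
            have "cmod (x - x0) \<le> e / (3 * (B + 1))" using nx w unfolding n_def d_def by linarith
            then have "cmod (x - x0)^2 \<le> n * (e / (3 * (B + 1)))"
              using nx norm_ge_zero[of "x - x0"] unfolding power2_eq_square by (intro mult_mono) linarith+
            then show ?thesis using R by (intro mult_left_mono) auto
          qed
          also have "\<dots> = n * (B * e / (3 * (B + 1)))" by simp
          also have "\<dots> \<le> n * (e / 3)"
            using R e by (intro mult_left_mono) (auto simp: n_def field_simps)
          finally show ?thesis by (simp add: mult.commute)
        qed
        have t2: "cmod ((px f (x0, y) - A) * (x - x0)) \<le> e/3 * n"
        proof -
          have "dist y y0 < d1" using ny w unfolding n_def d_def dist_norm by linarith
          then have "cmod (px f (x0, y) - A) \<le> e/3" using d1(2)[of y] by (simp add: dist_norm)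
          then show ?thesis unfolding norm_mult using nx e by (intro mult_mono) auto
        qed
        have t3: "cmod (f (x0, y) - f (x0, y0) - Bp * (y - y0)) \<le> e/3 * n"
        proof -
          have "cmod (y - y0) < d2" using ny w unfolding n_def d_def by linarith
          then have "cmod (f (x0, y) - f (x0, y0) - Bp * (y - y0)) \<le> e/3 * cmod (y - y0)" using d2(2) by blast
          also have "\<dots> \<le> e/3 * n" using ny e by (intro mult_left_mono) auto
          finally show ?thesis .
        qed
        have "norm (f w - f (x0, y0) - D (w - (x0, y0))) \<le> e/3 * n + e/3 * n + e/3 * n"
          unfolding eq by (rule order_trans[OF norm_triangle_ineq add_mono[OF order_trans[OF norm_triangle_ineq add_mono[OF t1 t2]] t3]])
        then show "norm (f w - f (x0, y0) - D (w - (x0, y0))) \<le> e * norm (w - (x0, y0))"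
          by (simp add: n_def)
      qed (rule dpos)
    qed
    moreover have "\<forall>c u v. D (c * u, c * v) = c * D (u, v)" by (simp add: D_def algebra_simps)
    ultimately show ?thesis using z0 by blast
  qed
  then show ?thesis using oN by (simp add: holo2_def)
qed

lemma holo2_good:
  assumes h: "holo2 f N" shows "good f N"
proof -
  have oN: "open N" using h by (simp add: holo2_def)
  have c: "continuous_on N f"
    using h unfolding holo2_def
    by (meson continuous_at_imp_continuous_on has_derivative_continuous)
  have sx: "(\<lambda>t. f (t, snd z)) field_differentiable at (fst z) \<and> (\<lambda>t. f (fst z, t)) field_differentiable at (snd z)"
    if z: "z \<in> N" for z
  proof -
    obtain x y where zz: "z = (x, y)" by (cases z)
    obtain D where D: "(f has_derivative D) (at (x, y))" "\<forall>c u v. D (c * u, c * v) = c * D (u, v)"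
      using h z zz unfolding holo2_def by blast
    have "((\<lambda>t. (t, y)) has_derivative (\<lambda>u. (u, 0))) (at x)"
      by (auto intro!: derivative_eq_intros)
    from diff_chain_at[OF this, of f D] D(1)
    have "((\<lambda>t. f (t, y)) has_derivative (\<lambda>u. D (u, 0))) (at x)" by (simp add: o_def)
    moreover have "(\<lambda>u. D (u, 0)) = (*) (D (1, 0))"
      using D(2) by (auto simp: fun_eq_iff mult.commute dest: spec[of _ _] ) (metis mult.right_neutral mult_zero_right)
    ultimately have 1: "(\<lambda>t. f (t, y)) field_differentiable at x"
      unfolding field_differentiable_def has_field_derivative_def by metis
    have "((\<lambda>t. (x, t)) has_derivative (\<lambda>u. (0, u))) (at y)"
      by (auto intro!: derivative_eq_intros)
    from diff_chain_at[OF this, of f D] D(1)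
    have "((\<lambda>t. f (x, t)) has_derivative (\<lambda>u. D (0, u))) (at y)" by (simp add: o_def)
    moreover have "(\<lambda>u. D (0, u)) = (*) (D (0, 1))"
      using D(2) by (auto simp: fun_eq_iff mult.commute) (metis mult.right_neutral mult_zero_right)
    ultimately have 2: "(\<lambda>t. f (x, t)) field_differentiable at y"
      unfolding field_differentiable_def has_field_derivative_def by metis
    show ?thesis using 1 2 zz by simp
  qed
  show ?thesis using oN c sx by (simp add: good_def)
qed


lemma local_y:
  assumes g: "good f N" and z0: "(x0, y0) \<in> N"
  obtains R B where "R > 0" "B \<ge> 0" "cball x0 R \<times> cball y0 R \<subseteq> N"
    "\<And>y y' x. y \<in> cball y0 R \<Longrightarrow> y' \<in> cball y0 R \<Longrightarrow> x \<in> cball x0 R \<Longrightarrow>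
        cmod (f (x, y') - f (x, y) - py f (x, y) * (y' - y)) \<le> B * cmod (y' - y)^2"
proof -
  have z0': "(y0, x0) \<in> swN N" using z0 by simp
  obtain R B where R: "R > 0" "B \<ge> 0" "cball y0 R \<times> cball x0 R \<subseteq> swN N"
    and tay: "\<And>y y' x. y \<in> cball y0 R \<Longrightarrow> y' \<in> cball y0 R \<Longrightarrow> x \<in> cball x0 R \<Longrightarrow>
        cmod (swf f (y', x) - swf f (y, x) - px (swf f) (y, x) * (y' - y)) \<le> B * cmod (y' - y)^2"
    and "\<And>y y' x. y \<in> cball y0 R \<Longrightarrow> y' \<in> cball y0 R \<Longrightarrow> x \<in> cball x0 R \<Longrightarrow>
        cmod (px (swf f) (y', x) - px (swf f) (y, x)) \<le> B * cmod (y' - y)"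
    by (rule local_x[OF good_swap[OF g] z0']) auto
  have sub: "cball x0 R \<times> cball y0 R \<subseteq> N" using R(3) by auto
  show ?thesis
    by (rule that[OF R(1,2) sub]) (use tay in \<open>auto simp: py_swf\<close>)
qed

lemma px_ulim:
  assumes g: "good f N" and z1: "(x1, y1) \<in> N"
  obtains R where "R > 0" "cball x1 R \<times> cball y1 R \<subseteq> N"
    "uniform_limit (cball y1 R)
       (\<lambda>n y. (f (x1 + of_real (R * inverse (real (Suc n))), y) - f (x1, y)) / of_real (R * inverse (real (Suc n))))
       (\<lambda>y. px f (x1, y)) sequentially"
proof -
  obtain R B where R: "R > 0" "B \<ge> 0" "cball x1 R \<times> cball y1 R \<subseteq> N"
    and tay: "\<And>x x' y. x \<in> cball x1 R \<Longrightarrow> x' \<in> cball x1 R \<Longrightarrow> y \<in> cball y1 R \<Longrightarrow>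
        cmod (f (x', y) - f (x, y) - px f (x, y) * (x' - x)) \<le> B * cmod (x' - x)^2"
    and lip0: "\<And>x x' y. x \<in> cball x1 R \<Longrightarrow> x' \<in> cball x1 R \<Longrightarrow> y \<in> cball y1 R \<Longrightarrow>
        cmod (px f (x', y) - px f (x, y)) \<le> B * cmod (x' - x)"
    by (rule local_x[OF g z1]) auto
  define d where "d = (\<lambda>n::nat. complex_of_real (R * inverse (real (Suc n))))"
  have dpos0: "R * inverse (real (Suc n)) > 0" for n using R by simp
  have dpos: "d n \<noteq> 0" for n using dpos0[of n] unfolding d_def of_real_eq_0_iff by linarith
  have dnorm: "cmod (d n) = R * inverse (real (Suc n))" for n
    using dpos0[of n] unfolding d_def norm_of_real by linarith
  have din: "x1 + d n \<in> cball x1 R" for n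
  proof -
    have "inverse (real (Suc n)) \<le> 1" by (auto simp: inverse_le_1_iff)
    then have "R * inverse (real (Suc n)) \<le> R * 1" using R by (intro mult_left_mono) auto
    then show ?thesis by (simp add: dist_norm dnorm)
  qed
  define F where "F = (\<lambda>n y. (f (x1 + d n, y) - f (x1, y)) / d n)"
  have ul: "uniform_limit (cball y1 R) F (\<lambda>y. px f (x1, y)) sequentially"
  proof (rule uniform_limitI)
    fix e :: real assume e: "e > 0"
    have "(\<lambda>n. B * R * inverse (real (Suc n))) \<longlonglongrightarrow> B * R * 0"
      by (intro tendsto_mult tendsto_const LIMSEQ_inverse_real_of_nat)
    then have "\<forall>\<^sub>F n in sequentially. B * R * inverse (real (Suc n)) < e"
      using e by (auto dest: order_tendstoD(2))
    then show "\<forall>\<^sub>F n in sequentially. \<forall>y\<in>cball y1 R. dist (F n y) (px f (x1, y)) < e"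
    proof (rule eventually_mono)
      fix n assume n: "B * R * inverse (real (Suc n)) < e"
      show "\<forall>y\<in>cball y1 R. dist (F n y) (px f (x1, y)) < e"
      proof
        fix y assume y: "y \<in> cball y1 R"
        have x1in: "x1 \<in> cball x1 R" using R by simp
        have "F n y - px f (x1, y) = (f (x1 + d n, y) - f (x1, y) - px f (x1, y) * (x1 + d n - x1)) / d n"
          using dpos[of n] by (simp add: F_def field_simps)
        then have "dist (F n y) (px f (x1, y)) = cmod (f (x1 + d n, y) - f (x1, y) - px f (x1, y) * (x1 + d n - x1)) / cmod (d n)"
          by (simp add: dist_norm norm_divide)
        also have "\<dots> \<le> B * cmod (d n)^2 / cmod (d n)"
          using tay[OF x1in din y] by (intro divide_right_mono) auto
        also have "\<dots> = B * cmod (d n)" using dpos[of n] by (simp add: power2_eq_square)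
        also have "\<dots> < e" using n by (simp add: dnorm mult.assoc)
        finally show "dist (F n y) (px f (x1, y)) < e" .
      qed
    qed
  qed
  show ?thesis by (rule that[OF R(1) R(3)]) (use ul in \<open>simp add: F_def d_def\<close>)
qed

lemma mixed:
  assumes g: "good f N" and z: "z \<in> N"
  shows "py (px f) z = px (py f) z"
proof -
  obtain x1 y1 where zz: "z = (x1, y1)" by (cases z)
  have z1: "(x1, y1) \<in> N" using z zz by simp
  obtain R where R: "R > 0" "cball x1 R \<times> cball y1 R \<subseteq> N"
    and ul: "uniform_limit (cball y1 R)
       (\<lambda>n y. (f (x1 + of_real (R * inverse (real (Suc n))), y) - f (x1, y)) / of_real (R * inverse (real (Suc n))))
       (\<lambda>y. px f (x1, y)) sequentially"
    by (rule px_ulim[OF g z1]) auto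
  define d where "d = (\<lambda>n::nat. complex_of_real (R * inverse (real (Suc n))))"
  have dpos0: "R * inverse (real (Suc n)) > 0" for n using R by simp
  have dpos: "d n \<noteq> 0" for n using dpos0[of n] unfolding d_def of_real_eq_0_iff by linarith
  have dnorm: "cmod (d n) = R * inverse (real (Suc n))" for n
    using dpos0[of n] unfolding d_def norm_of_real by linarith
  have din: "x1 + d n \<in> cball x1 R" for n
  proof -
    have "inverse (real (Suc n)) \<le> 1" by (auto simp: inverse_le_1_iff)
    then have "R * inverse (real (Suc n)) \<le> R * 1" using R by (intro mult_left_mono) auto
    then show ?thesis by (simp add: dist_norm dnorm)
  qed
  define F where "F = (\<lambda>n y. (f (x1 + d n, y) - f (x1, y)) / d n)"
  define F' where "F' = (\<lambda>n y. (py f (x1 + d n, y) - py f (x1, y)) / d n)"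
  have ul': "uniform_limit (cball y1 R) F (\<lambda>y. px f (x1, y)) sequentially"
    using ul by (simp add: F_def d_def)
  have oN: "open N" using g by (simp add: good_def)
  obtain g' where g': "continuous_on (cball y1 R) (\<lambda>y. px f (x1, y))"
     "\<And>w. w \<in> ball y1 R \<Longrightarrow> ((\<lambda>y. px f (x1, y)) has_field_derivative g' w) (at w) \<and>
           ((\<lambda>n. F' n w) \<longlongrightarrow> g' w) sequentially"
  proof (rule has_complex_derivative_uniform_limit[OF _ ul' _ R(1)])
    show "\<forall>\<^sub>F n in sequentially. continuous_on (cball y1 R) (F n) \<and>
            (\<forall>w\<in>ball y1 R. (F n has_field_derivative F' n w) (at w))"
    proof (rule always_eventually, rule allI)
      fix n
      have s1: "cball y1 R \<subseteq> {t. (x1 + d n, t) \<in> N}" "cball y1 R \<subseteq> {t. (x1, t) \<in> N}"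
        using R(2) din R by auto
      have c1: "continuous_on (cball y1 R) (\<lambda>t. f (x1 + d n, t))" by (rule good_slice_y_cont[OF g s1(1)])
      have c2: "continuous_on (cball y1 R) (\<lambda>t. f (x1, t))" by (rule good_slice_y_cont[OF g s1(2)])
      have dd: "((\<lambda>t. f (a, t)) has_field_derivative py f (a, w)) (at w)" if "(a, w) \<in> N" for a w
        using g that unfolding good_def py_def
        by (metis DERIV_deriv_iff_field_differentiable fst_conv snd_conv)
      show "continuous_on (cball y1 R) (F n) \<and> (\<forall>w\<in>ball y1 R. (F n has_field_derivative F' n w) (at w))"
      proof (intro conjI ballI)
        show "continuous_on (cball y1 R) (F n)"
          unfolding F_def using c1 c2 dpos[of n] by (auto intro!: continuous_intros)
        fix w assume w: "w \<in> ball y1 R"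
        then have "w \<in> cball y1 R" by auto
        then have "(x1 + d n, w) \<in> N" "(x1, w) \<in> N" using s1 by auto
        from dd[OF this(1)] dd[OF this(2)] dpos[of n]
        show "(F n has_field_derivative F' n w) (at w)" unfolding F_def F'_def
          by (auto intro!: derivative_eq_intros)
      qed
    qed
  qed auto
  have y1b: "y1 \<in> ball y1 R" using R by simp
  have 1: "py (px f) (x1, y1) = g' y1"
    using g'(2)[OF y1b] by (simp add: py_def DERIV_imp_deriv)
  have gpy: "good (py f) N" by (rule good_py[OF g])
  have "((\<lambda>t. py f (t, y1)) has_field_derivative px (py f) (x1, y1)) (at x1)"
    using gpy z1 unfolding good_def px_def
    by (metis DERIV_deriv_iff_field_differentiable fst_conv snd_conv)
  then have lim0: "((\<lambda>t. (py f (t, y1) - py f (x1, y1)) / (t - x1)) \<longlongrightarrow> px (py f) (x1, y1)) (at x1)"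
    by (simp add: DERIV_def has_field_derivative_iff)
  have dlim: "filterlim (\<lambda>n. x1 + d n) (at x1) sequentially"
  proof (rule filterlim_atI)
    have "(\<lambda>n. R * inverse (real (Suc n))) \<longlonglongrightarrow> R * 0"
      by (intro tendsto_mult tendsto_const LIMSEQ_inverse_real_of_nat)
    then have "d \<longlonglongrightarrow> of_real (R * 0)" unfolding d_def by (intro tendsto_of_real)
    then show "(\<lambda>n. x1 + d n) \<longlonglongrightarrow> x1" using tendsto_add[OF tendsto_const[of x1]] by fastforce
    show "\<forall>\<^sub>F n in sequentially. x1 + d n \<noteq> x1" using dpos by simp
  qed
  have "(\<lambda>n. F' n y1) \<longlonglongrightarrow> px (py f) (x1, y1)"
    using filterlim_compose[OF lim0 dlim] by (simp add: F'_def)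
  then have 2: "g' y1 = px (py f) (x1, y1)"
    using g'(2)[OF y1b] LIMSEQ_unique by blast
  show ?thesis using 1 2 zz by simp
qed


lemma px_pair: "px f (x, y) = deriv (\<lambda>t. f (t, y)) x" by (simp add: px_def)
lemma py_pair: "py f (x, y) = deriv (\<lambda>t. f (x, t)) y" by (simp add: py_def)

lemma good_sx: "good f N \<Longrightarrow> (x, y) \<in> N \<Longrightarrow> (\<lambda>t. f (t, y)) field_differentiable at x"
  unfolding good_def by (metis fst_conv snd_conv)
lemma good_sy: "good f N \<Longrightarrow> (x, y) \<in> N \<Longrightarrow> (\<lambda>t. f (x, t)) field_differentiable at y"
  unfolding good_def by (metis fst_conv snd_conv)
lemma good_open: "good f N \<Longrightarrow> open N" by (simp add: good_def)
lemma good_cont: "good f N \<Longrightarrow> continuous_on N f" by (simp add: good_def)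

lemma goodI:
  assumes "open N" "continuous_on N f"
    "\<And>x y. (x, y) \<in> N \<Longrightarrow> (\<lambda>t. f (t, y)) field_differentiable at x"
    "\<And>x y. (x, y) \<in> N \<Longrightarrow> (\<lambda>t. f (x, t)) field_differentiable at y"
  shows "good f N"
  using assms unfolding good_def by (metis prod.collapse)

lemma good_const: "open N \<Longrightarrow> good (\<lambda>z. c) N"
  by (rule goodI) (auto intro!: continuous_intros)

lemma good_fst: "open N \<Longrightarrow> good fst N"
  by (rule goodI) (auto intro!: continuous_intros field_differentiable_ident)

lemma good_snd: "open N \<Longrightarrow> good snd N"
  by (rule goodI) (auto intro!: continuous_intros field_differentiable_ident)

lemma good_add: assumes f: "good f N" and g: "good g N" shows "good (\<lambda>z. f z + g z) N"
proof (rule goodI)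
  show "open N" using good_open[OF f] .
  show "continuous_on N (\<lambda>z. f z + g z)" using good_cont[OF f] good_cont[OF g] by (auto intro!: continuous_intros)
  fix x y assume xy: "(x, y) \<in> N"
  show "(\<lambda>t. f (t, y) + g (t, y)) field_differentiable at x"
    using good_sx[OF f xy] good_sx[OF g xy] xy by (auto intro!: field_differentiable_add)
  show "(\<lambda>t. f (x, t) + g (x, t)) field_differentiable at y"
    using good_sy[OF f xy] good_sy[OF g xy] xy by (auto intro!: field_differentiable_add)
qed
lemma good_diff: assumes f: "good f N" and g: "good g N" shows "good (\<lambda>z. f z - g z) N"
proof (rule goodI)
  show "open N" using good_open[OF f] .
  show "continuous_on N (\<lambda>z. f z - g z)" using good_cont[OF f] good_cont[OF g] by (auto intro!: continuous_intros)
  fix x y assume xy: "(x, y) \<in> N"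
  show "(\<lambda>t. f (t, y) - g (t, y)) field_differentiable at x"
    using good_sx[OF f xy] good_sx[OF g xy] xy by (auto intro!: field_differentiable_diff)
  show "(\<lambda>t. f (x, t) - g (x, t)) field_differentiable at y"
    using good_sy[OF f xy] good_sy[OF g xy] xy by (auto intro!: field_differentiable_diff)
qed
lemma good_mult: assumes f: "good f N" and g: "good g N" shows "good (\<lambda>z. f z * g z) N"
proof (rule goodI)
  show "open N" using good_open[OF f] .
  show "continuous_on N (\<lambda>z. f z * g z)" using good_cont[OF f] good_cont[OF g] by (auto intro!: continuous_intros)
  fix x y assume xy: "(x, y) \<in> N"
  show "(\<lambda>t. f (t, y) * g (t, y)) field_differentiable at x"
    using good_sx[OF f xy] good_sx[OF g xy] xy by (auto intro!: field_differentiable_mult)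
  show "(\<lambda>t. f (x, t) * g (x, t)) field_differentiable at y"
    using good_sy[OF f xy] good_sy[OF g xy] xy by (auto intro!: field_differentiable_mult)
qed
lemma good_divide: assumes f: "good f N" and g: "good g N" and nz: "\<And>z. z \<in> N \<Longrightarrow> g z \<noteq> 0" shows "good (\<lambda>z. f z / g z) N"
proof (rule goodI)
  show "open N" using good_open[OF f] .
  show "continuous_on N (\<lambda>z. f z / g z)" using good_cont[OF f] good_cont[OF g] nz by (auto intro!: continuous_intros)
  fix x y assume xy: "(x, y) \<in> N"
  show "(\<lambda>t. f (t, y) / g (t, y)) field_differentiable at x"
    using good_sx[OF f xy] good_sx[OF g xy] nz xy by (auto intro!: field_differentiable_divide)
  show "(\<lambda>t. f (x, t) / g (x, t)) field_differentiable at y"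
    using good_sy[OF f xy] good_sy[OF g xy] nz xy by (auto intro!: field_differentiable_divide)
qed
lemma good_minus: assumes f: "good f N" shows "good (\<lambda>z. - f z) N"
proof (rule goodI)
  show "open N" using good_open[OF f] .
  show "continuous_on N (\<lambda>z. - f z)" using good_cont[OF f] by (auto intro!: continuous_intros)
  fix x y assume xy: "(x, y) \<in> N"
  show "(\<lambda>t. - f (t, y)) field_differentiable at x"
    using good_sx[OF f xy] by (auto intro!: field_differentiable_minus)
  show "(\<lambda>t. - f (x, t)) field_differentiable at y"
    using good_sy[OF f xy] by (auto intro!: field_differentiable_minus)
qed

lemma good_pow: "good f N \<Longrightarrow> good (\<lambda>z. f z ^ n) N"
  by (induction n) (auto simp: good_open intro: good_const good_mult)

lemma good_subset: "good f N \<Longrightarrow> open M \<Longrightarrow> M \<subseteq> N \<Longrightarrow> good f M"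
  unfolding good_def by (auto intro: continuous_on_subset)

lemma good_px_sx: "good f N \<Longrightarrow> (x, y) \<in> N \<Longrightarrow> (\<lambda>t. px f (t, y)) field_differentiable at x"
  using good_sx[OF good_px] .

lemma px_add: "good f N \<Longrightarrow> good g N \<Longrightarrow> z \<in> N \<Longrightarrow> px (\<lambda>z. f z + g z) z = px f z + px g z"
  by (cases z) (simp add: px_pair good_sx)
lemma px_diff: "good f N \<Longrightarrow> good g N \<Longrightarrow> z \<in> N \<Longrightarrow> px (\<lambda>z. f z - g z) z = px f z - px g z"
  by (cases z) (simp add: px_pair good_sx)
lemma px_mult: "good f N \<Longrightarrow> good g N \<Longrightarrow> z \<in> N \<Longrightarrow> px (\<lambda>z. f z * g z) z = px f z * g z + f z * px g z"
  by (cases z) (simp add: px_pair good_sx algebra_simps)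
lemma px_divide: "good f N \<Longrightarrow> good g N \<Longrightarrow> z \<in> N \<Longrightarrow> g z \<noteq> 0 \<Longrightarrow>
    px (\<lambda>z. f z / g z) z = (px f z * g z - f z * px g z) / (g z)^2"
  by (cases z) (simp add: px_pair good_sx)
lemma px_ydep: "px (\<lambda>z. c (snd z)) z = 0"
  by (cases z) (simp add: px_pair)

lemma py_add: "good f N \<Longrightarrow> good g N \<Longrightarrow> z \<in> N \<Longrightarrow> py (\<lambda>z. f z + g z) z = py f z + py g z"
  by (cases z) (simp add: py_pair good_sy)
lemma py_diff: "good f N \<Longrightarrow> good g N \<Longrightarrow> z \<in> N \<Longrightarrow> py (\<lambda>z. f z - g z) z = py f z - py g z"
  by (cases z) (simp add: py_pair good_sy)
lemma py_mult: "good f N \<Longrightarrow> good g N \<Longrightarrow> z \<in> N \<Longrightarrow> py (\<lambda>z. f z * g z) z = py f z * g z + f z * py g z"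
  by (cases z) (simp add: py_pair good_sy algebra_simps)
lemma py_divide: "good f N \<Longrightarrow> good g N \<Longrightarrow> z \<in> N \<Longrightarrow> g z \<noteq> 0 \<Longrightarrow>
    py (\<lambda>z. f z / g z) z = (py f z * g z - f z * py g z) / (g z)^2"
  by (cases z) (simp add: py_pair good_sy)
lemma py_ypow: "py (\<lambda>z. snd z ^ Suc n) z = of_nat (Suc n) * snd z ^ n"
proof -
  obtain a b where zz: "z = (a, b)" by (cases z)
  have "((\<lambda>t. t ^ Suc n) has_field_derivative of_nat (Suc n) * b ^ n) (at b)"
    using DERIV_power[OF DERIV_ident, of "Suc n" b UNIV] by (simp del: power_Suc)
  then have "deriv (\<lambda>t. t ^ Suc n) b = of_nat (Suc n) * b ^ n" by (rule DERIV_imp_deriv)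
  then show ?thesis using zz by (simp add: py_pair del: power_Suc)
qed

lemma px_cong:
  assumes "open W" "z \<in> W" "\<And>w. w \<in> W \<Longrightarrow> f w = g w"
  shows "px f z = px g z"
proof -
  obtain x y where zz: "z = (x, y)" by (cases z)
  have "open {t. (t, y) \<in> W}" by (rule open_slice_x[OF assms(1)])
  moreover have "x \<in> {t. (t, y) \<in> W}" using assms zz by simp
  ultimately have "eventually (\<lambda>t. t \<in> {t. (t, y) \<in> W}) (nhds x)" by (rule eventually_nhds_in_open)
  then have "eventually (\<lambda>t. f (t, y) = g (t, y)) (nhds x)"
    by (rule eventually_mono) (use assms in auto)
  then show ?thesis unfolding zz px_pair by (rule deriv_cong_ev) simp
qed

lemma py_cong:
  assumes "open W" "z \<in> W" "\<And>w. w \<in> W \<Longrightarrow> f w = g w"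
  shows "py f z = py g z"
proof -
  obtain x y where zz: "z = (x, y)" by (cases z)
  have "open {t. (x, t) \<in> W}" by (rule open_slice_y[OF assms(1)])
  moreover have "y \<in> {t. (x, t) \<in> W}" using assms zz by simp
  ultimately have "eventually (\<lambda>t. t \<in> {t. (x, t) \<in> W}) (nhds y)" by (rule eventually_nhds_in_open)
  then have "eventually (\<lambda>t. f (x, t) = g (x, t)) (nhds y)"
    by (rule eventually_mono) (use assms in auto)
  then show ?thesis unfolding zz py_pair by (rule deriv_cong_ev) simp
qed

lemma ydiv:
  assumes g: "good f N" and slice: "\<And>x y. (x, y) \<in> N \<Longrightarrow> (x, 0) \<in> N"
    and zero: "\<And>x. (x, 0) \<in> N \<Longrightarrow> f (x, 0) = 0"
  defines "q \<equiv> (\<lambda>z. if snd z = 0 then py f (fst z, 0) else f z / snd z)"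
  shows "good q N" "\<And>z. z \<in> N \<Longrightarrow> f z = snd z * q z"
proof -
  have oN: "open N" using g by (simp add: good_def)
  have gpy: "good (py f) N" by (rule good_py[OF g])
  show "f z = snd z * q z" if "z \<in> N" for z
  proof (cases "snd z = 0")
    case True
    then obtain x where "z = (x, 0)" by (cases z) auto
    then show ?thesis using zero that by simp
  next
    case False then show ?thesis by (simp add: q_def)
  qed
  show "good q N"
  proof (rule goodI[OF oN])
    show "continuous_on N q"
    proof -
      have "isCont q z" if z: "z \<in> N" for z
      proof (cases "snd z = 0")
        case False
        define W where "W = N \<inter> {z. snd z \<noteq> 0}"
        have oW: "open W" unfolding W_def
          by (intro open_Int oN open_Collect_neq) (auto intro!: continuous_intros)
        have zW: "z \<in> W" using z False by (simp add: W_def)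
        have "continuous_on W (\<lambda>z. f z / snd z)"
          by (intro continuous_intros continuous_on_subset[OF good_cont[OF g]]) (auto simp: W_def)
        then have "continuous_on W q"
          by (rule continuous_on_cong[THEN iffD1, rotated 2]) (auto simp: W_def q_def)
        then show ?thesis using oW zW continuous_on_eq_continuous_at by blast
      next
        case True
        then obtain x1 where zz: "z = (x1, 0)" by (cases z) auto
        obtain R B where R: "R > 0" "B \<ge> 0" "cball x1 R \<times> cball 0 R \<subseteq> N"
          and tay: "\<And>y y' x. y \<in> cball 0 R \<Longrightarrow> y' \<in> cball 0 R \<Longrightarrow> x \<in> cball x1 R \<Longrightarrow>
            cmod (f (x, y') - f (x, y) - py f (x, y) * (y' - y)) \<le> B * cmod (y' - y)^2"
          by (rule local_y[OF g, of x1 0]) (use z zz in auto)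
        have icp: "isCont (py f) (x1, 0)"
          using good_cont[OF gpy] oN z zz continuous_on_eq_continuous_at by blast
        show ?thesis unfolding continuous_at_eps_delta
        proof (intro allI impI)
          fix e :: real assume e: "e > 0"
          obtain d1 where d1: "d1 > 0" "\<And>w. dist w (x1, 0) < d1 \<Longrightarrow> dist (py f w) (py f (x1, 0)) < e/2"
            using icp[unfolded continuous_at_eps_delta] e by (meson half_gt_zero)
          define d where "d = min (min d1 R) (e / (2 * (B + 1)))"
          have dpos: "d > 0" using d1 R e by (simp add: d_def)
          show "\<exists>d>0. \<forall>w. dist w z < d \<longrightarrow> dist (q w) (q z) < e"
          proof (intro exI conjI allI impI)
            fix w assume w: "dist w z < d"
            obtain x y where ww: "w = (x, y)" by (cases w)
            have dx: "dist x x1 < d" and dy: "dist y 0 < d"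
            proof -
              have "dist x x1 \<le> dist w z" "dist y 0 \<le> dist w z"
                using zz ww by (simp_all add: dist_Pair_Pair real_sqrt_sum_squares_ge1 real_sqrt_sum_squares_ge2)
              then show "dist x x1 < d" "dist y 0 < d" using w by linarith+
            qed
            have xin: "x \<in> cball x1 R" and yin: "y \<in> cball 0 R" and y0in: "0 \<in> cball (0::complex) R"
              using dx dy R by (auto simp: d_def dist_commute)
            have qz: "q z = py f (x1, 0)" using zz by (simp add: q_def)
            have xN: "(x, 0) \<in> N" using R(3) xin R by auto
            have a: "cmod (q w - py f (x, 0)) \<le> B * cmod y"
            proof (cases "y = 0")
              case True then show ?thesis using ww by (simp add: q_def)
            next
              case False
              have "q w - py f (x, 0) = (f (x, y) - f (x, 0) - py f (x, 0) * (y - 0)) / y"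
                using False ww zero[OF xN] by (simp add: q_def field_simps)
              then have "cmod (q w - py f (x, 0)) = cmod (f (x, y) - f (x, 0) - py f (x, 0) * (y - 0)) / cmod y"
                by (simp add: norm_divide)
              also have "\<dots> \<le> B * cmod (y - 0)^2 / cmod y"
                by (intro divide_right_mono tay[OF y0in yin xin]) auto
              also have "\<dots> = B * cmod y" using False by (simp add: power2_eq_square)
              finally show ?thesis .
            qed
            have b: "dist (py f (x, 0)) (py f (x1, 0)) < e/2"
            proof (rule d1(2))
              have "dist (x, 0::complex) (x1, 0) = dist x x1" by (simp add: dist_Pair_Pair)
              then show "dist (x, 0::complex) (x1, 0) < d1" using dx by (simp add: d_def)
            qed
            have "B * cmod y \<le> B * (e / (2 * (B + 1)))"
              using dy R by (intro mult_left_mono) (auto simp: d_def)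
            also have "\<dots> \<le> e/2" using R e by (simp add: field_simps)
            finally have "cmod (q w - py f (x, 0)) \<le> e/2" using a by linarith
            moreover have "dist (q w) (py f (x1, 0)) \<le> dist (q w) (py f (x, 0)) + dist (py f (x, 0)) (py f (x1, 0))"
              by (rule dist_triangle)
            ultimately show "dist (q w) (q z) < e" unfolding qz using b by (simp add: dist_norm)
          qed (rule dpos)
        qed
      qed
      then show ?thesis by (simp add: continuous_at_imp_continuous_on)
    qed
  next
    fix x y assume xy: "(x, y) \<in> N"
    show "(\<lambda>t. q (t, y)) field_differentiable at x"
    proof (cases "y = 0")
      case True
      then show ?thesis using good_sx[OF gpy xy] by (simp add: q_def)
    next
      case False
      then show ?thesis using good_sx[OF g xy] by (auto simp: q_def intro!: field_differentiable_divide field_differentiable_const)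
    qed
  next
    fix x y assume xy: "(x, y) \<in> N"
    define S where "S = {t. (x, t) \<in> N}"
    have oS: "open S" unfolding S_def by (rule open_slice_y[OF oN])
    have hS: "(\<lambda>t. f (x, t)) holomorphic_on S" unfolding S_def by (rule good_slice_y_holo[OF g])
    have "(\<lambda>t. if t = 0 then deriv (\<lambda>t. f (x, t)) 0 else ((f (x, t)) - f (x, 0)) / (t - 0)) holomorphic_on S"
      by (rule pole_lemma_open[OF hS oS])
    moreover have "(\<lambda>t. if t = 0 then deriv (\<lambda>t. f (x, t)) 0 else ((f (x, t)) - f (x, 0)) / (t - 0)) = (\<lambda>t. q (x, t))"
      using zero[OF slice[OF xy]] by (auto simp: q_def py_pair fun_eq_iff)
    ultimately have "(\<lambda>t. q (x, t)) holomorphic_on S" by simp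
    moreover have "y \<in> S" using xy by (simp add: S_def)
    ultimately show "(\<lambda>t. q (x, t)) field_differentiable at y"
      using oS holomorphic_on_imp_differentiable_at by blast
  qed
qed


lemma alg_exist:
  fixes l1 l2 l3 F1 F2 F3 p1 p2 p3 q1 q2 q3 :: complex
  assumes l1: "l1 \<noteq> 0" and l2: "l2 \<noteq> 0" and F: "F2 - F1 \<noteq> 0"
    and s1: "l1 + l2 + l3 = 0" and s2: "l1 * F1 + l2 * F2 + l3 * F3 = 0"
    and sp: "p1 + p2 + p3 = 0" and sq: "q1 + q2 + q3 = 0"
  assumes a1_def: "a1 = (p1 - q1) / l1" and a2_def: "a2 = (p2 - q2) / l2"
  assumes Q_def: "Q = (a1 - a2) / (F2 - F1)"
  assumes P_def: "P = a1 + Q * F1"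
  shows "p1 - q1 = P * (l1 * 1) - Q * (l1 * F1)"
    "p2 - q2 = P * (l2 * 1) - Q * (l2 * F2)"
    "p3 - q3 = P * (l3 * 1) - Q * (l3 * F3)"
proof -
  have e1: "P - Q * F1 = a1" by (simp add: P_def)
  have e2: "P - Q * F2 = a2"
  proof -
    have "Q * (F2 - F1) = a1 - a2" using F by (simp add: Q_def)
    then show ?thesis by (simp add: P_def algebra_simps)
  qed
  show 1: "p1 - q1 = P * (l1 * 1) - Q * (l1 * F1)"
  proof -
    have "P * (l1 * 1) - Q * (l1 * F1) = l1 * (P - Q * F1)" by (simp add: algebra_simps)
    also have "\<dots> = p1 - q1" using e1 l1 by (simp add: a1_def)
    finally show ?thesis by simp
  qed
  show 2: "p2 - q2 = P * (l2 * 1) - Q * (l2 * F2)"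
  proof -
    have "P * (l2 * 1) - Q * (l2 * F2) = l2 * (P - Q * F2)" by (simp add: algebra_simps)
    also have "\<dots> = p2 - q2" using e2 l2 by (simp add: a2_def)
    finally show ?thesis by simp
  qed
  have l3: "l3 = - l1 - l2"
  proof -
    have "l3 = (l1 + l2 + l3) - l1 - l2" by (simp add: algebra_simps)
    then show ?thesis using s1 by simp
  qed
  have lf3: "l3 * F3 = - l1 * F1 - l2 * F2"
  proof -
    have "l3 * F3 = (l1 * F1 + l2 * F2 + l3 * F3) - l1 * F1 - l2 * F2" by (simp add: algebra_simps)
    then show ?thesis using s2 by simp
  qed
  have "P * (l3 * 1) - Q * (l3 * F3) = - (P * (l1 * 1) - Q * (l1 * F1)) - (P * (l2 * 1) - Q * (l2 * F2))"
    unfolding lf3 by (simp add: l3 algebra_simps)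
  also have "\<dots> = - (p1 - q1) - (p2 - q2)" using 1 2 by simp
  also have "\<dots> = p3 - q3"
  proof -
    have "p3 = (p1 + p2 + p3) - p1 - p2" "q3 = (q1 + q2 + q3) - q1 - q2" by (simp_all add: algebra_simps)
    then have "p3 = - p1 - p2" "q3 = - q1 - q2" using sp sq by simp_all
    then show ?thesis by (simp add: algebra_simps)
  qed
  finally show "p3 - q3 = P * (l3 * 1) - Q * (l3 * F3)" by simp
qed

lemma alg_unique:
  fixes l1 l2 F1 F2 p1 p2 q1 q2 lam xl yl P' Q' :: complex
  assumes l1: "l1 \<noteq> 0" and l2: "l2 \<noteq> 0" and F: "F2 - F1 \<noteq> 0" and lam: "lam \<noteq> 0"
    and e1: "xl * l1 + lam * p1 - (yl * (l1 * F1) + lam * q1) = P' * (lam * l1) - Q' * (lam * l1 * F1)"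
    and e2: "xl * l2 + lam * p2 - (yl * (l2 * F2) + lam * q2) = P' * (lam * l2) - Q' * (lam * l2 * F2)"
  assumes a1_def: "a1 = (p1 - q1) / l1" and a2_def: "a2 = (p2 - q2) / l2"
  assumes Q_def: "Q = (a1 - a2) / (F2 - F1)"
  assumes P_def: "P = a1 + Q * F1"
  shows "Q' = Q + yl / lam" "P' = P + xl / lam"
proof -
  have f1: "a1 = (P' - xl / lam) - (Q' - yl / lam) * F1"
  proof -
    have L: "lam * l1 * a1 = lam * p1 - lam * q1" using l1 by (simp add: a1_def field_simps)
    have R: "lam * l1 * ((P' - xl / lam) - (Q' - yl / lam) * F1) =
        P' * (lam * l1) - Q' * (lam * l1 * F1) - xl * l1 + yl * (l1 * F1)"
      using lam by (simp add: field_simps)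
    have e': "P' * (lam * l1) - Q' * (lam * l1 * F1) = xl * l1 + lam * p1 - (yl * (l1 * F1) + lam * q1)"
      using e1 by simp
    have "lam * l1 * a1 = lam * l1 * ((P' - xl / lam) - (Q' - yl / lam) * F1)"
      unfolding L R e' by (simp add: algebra_simps)
    then show ?thesis using l1 lam by simp
  qed
  have f2: "a2 = (P' - xl / lam) - (Q' - yl / lam) * F2"
  proof -
    have L: "lam * l2 * a2 = lam * p2 - lam * q2" using l2 by (simp add: a2_def field_simps)
    have R: "lam * l2 * ((P' - xl / lam) - (Q' - yl / lam) * F2) =
        P' * (lam * l2) - Q' * (lam * l2 * F2) - xl * l2 + yl * (l2 * F2)"
      using lam by (simp add: field_simps)
    have e': "P' * (lam * l2) - Q' * (lam * l2 * F2) = xl * l2 + lam * p2 - (yl * (l2 * F2) + lam * q2)"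
      using e2 by simp
    have "lam * l2 * a2 = lam * l2 * ((P' - xl / lam) - (Q' - yl / lam) * F2)"
      unfolding L R e' by (simp add: algebra_simps)
    then show ?thesis using l2 lam by simp
  qed
  have "a1 - a2 = (Q' - yl / lam) * (F2 - F1)" unfolding f1 f2 by (simp add: algebra_simps add_divide_distrib diff_divide_distrib)
  then have q: "Q' - yl / lam = Q" using F by (simp add: Q_def)
  then show "Q' = Q + yl / lam" by (simp add: algebra_simps)
  show "P' = P + xl / lam" using f1 q by (simp add: P_def algebra_simps)
qed

lemma alg_decomp:
  fixes Y h1 h2 l1 l2 pl1 pl2 yl1 yl2 yh1 yh2 :: complex and b :: nat
  assumes Y: "Y \<noteq> 0" and l1: "l1 \<noteq> 0" and l2: "l2 \<noteq> 0" and h: "h1 - h2 \<noteq> 0"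
  assumes q1_def: "q1 = yl1 * (Y ^ Suc b * h1) + l1 * (of_nat (Suc b) * Y ^ b * h1 + Y ^ Suc b * yh1)"
    and q2_def: "q2 = yl2 * (Y ^ Suc b * h2) + l2 * (of_nat (Suc b) * Y ^ b * h2 + Y ^ Suc b * yh2)"
  assumes a1_def: "a1 = (pl1 - q1) / l1" and a2_def: "a2 = (pl2 - q2) / l2"
  assumes Q_def: "Q = (a1 - a2) / (Y ^ Suc b * h2 - Y ^ Suc b * h1)"
  assumes P_def: "P = a1 + Q * (Y ^ Suc b * h1)"
  assumes A_def: "A = (pl1 / l1 - pl2 / l2) / (h1 - h2)"
  assumes B_def: "B = (h1 * yl1 / l1 - h2 * yl2 / l2 + (yh1 - yh2)) / (h1 - h2)"
  shows "Q = B + (of_nat (Suc b) / Y - A * (1 / Y ^ Suc b))"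
    "P = pl1 / l1 - Y ^ Suc b * h1 * yl1 / l1 - Y ^ Suc b * yh1 - h1 * A + Y ^ Suc b * h1 * B"
proof -
  have Yp: "Y ^ Suc b \<noteq> 0" using Y by simp
  define T where "T = A - Y ^ Suc b * B - of_nat (Suc b) * Y ^ b"
  have a1e: "a1 = pl1 / l1 - Y ^ Suc b * h1 * yl1 / l1 - of_nat (Suc b) * Y ^ b * h1 - Y ^ Suc b * yh1"
    using l1 by (simp add: a1_def q1_def field_simps)
  have a2e: "a2 = pl2 / l2 - Y ^ Suc b * h2 * yl2 / l2 - of_nat (Suc b) * Y ^ b * h2 - Y ^ Suc b * yh2"
    using l2 by (simp add: a2_def q2_def field_simps)
  have den: "Y ^ Suc b * h2 - Y ^ Suc b * h1 = - (Y ^ Suc b * (h1 - h2))" by (simp add: algebra_simps)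
  have "a1 - a2 = (pl1 / l1 - pl2 / l2) - Y ^ Suc b * (h1 * yl1 / l1 - h2 * yl2 / l2 + (yh1 - yh2))
        - of_nat (Suc b) * Y ^ b * (h1 - h2)"
    unfolding a1e a2e by (simp add: algebra_simps)
  then have "a1 - a2 = A * (h1 - h2) - Y ^ Suc b * (B * (h1 - h2)) - of_nat (Suc b) * Y ^ b * (h1 - h2)"
    using h by (simp add: A_def B_def)
  then have a12: "a1 - a2 = (h1 - h2) * T"
    by (simp add: T_def algebra_simps)
  have Qe: "Q = - T / Y ^ Suc b"
  proof -
    have "Q = ((h1 - h2) * T) / (- (Y ^ Suc b * (h1 - h2)))" unfolding Q_def den a12 ..
    also have "\<dots> = - T / Y ^ Suc b" using h Yp by (simp add: field_simps)
    finally show ?thesis .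
  qed
  show "Q = B + (of_nat (Suc b) / Y - A * (1 / Y ^ Suc b))"
  proof -
    have "Y ^ b / Y ^ Suc b = 1 / Y" using Y by simp
    then have "of_nat (Suc b) * Y ^ b / Y ^ Suc b = of_nat (Suc b) / Y"
      by (metis times_divide_eq_right mult.right_neutral)
    moreover have "- T / Y ^ Suc b = - A / Y ^ Suc b + Y ^ Suc b * B / Y ^ Suc b + of_nat (Suc b) * Y ^ b / Y ^ Suc b"
      unfolding T_def by (simp add: diff_divide_distrib add_divide_distrib)
    moreover have "Y ^ Suc b * B / Y ^ Suc b = B" using Yp by simp
    ultimately show ?thesis unfolding Qe by (simp add: algebra_simps)
  qed
  have QY: "Q * (Y ^ Suc b * h1) = - T * h1" unfolding Qe using Yp by simp
  show "P = pl1 / l1 - Y ^ Suc b * h1 * yl1 / l1 - Y ^ Suc b * yh1 - h1 * A + Y ^ Suc b * h1 * B"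
    unfolding P_def QY a1e by (simp add: T_def algebra_simps)
qed

lemma alg_AG:
  fixes h12 h23 h31 p12 p23 p31 :: complex
  assumes "h12 \<noteq> 0" "h23 \<noteq> 0" "h31 \<noteq> 0" "h12 + h23 + h31 = 0" "p12 + p23 + p31 = 0"
  shows "(p23 / h23 - p31 / h31) / h12 = - ((h12 * p23 - h23 * p12) / (h12 * h23 * h31))"
proof -
  have p12: "p12 = - p23 - p31"
  proof -
    have "p12 = (p12 + p23 + p31) - p23 - p31" by (simp add: algebra_simps)
    then show ?thesis using assms(5) by simp
  qed
  have h12: "h12 = - h23 - h31"
  proof -
    have "h12 = (h12 + h23 + h31) - h23 - h31" by (simp add: algebra_simps)
    then show ?thesis using assms(4) by simp
  qed
  have "- (h12 * p23 - h23 * p12) = h31 * p23 - h23 * p31" unfolding p12 h12 by (simp add: algebra_simps)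
  then have "- ((h12 * p23 - h23 * p12) / (h12 * h23 * h31)) = (h31 * p23 - h23 * p31) / (h12 * h23 * h31)"
    by (metis minus_divide_left)
  also have "\<dots> = (p23 / h23 - p31 / h31) / h12" using assms(1-3) by (simp add: field_simps)
  finally show ?thesis by simp
qed


lemma px_minus: "good f N \<Longrightarrow> z \<in> N \<Longrightarrow> px (\<lambda>z. - f z) z = - px f z"
  by (cases z) (simp add: px_pair good_sx)

lemma open_nonzero: "continuous_on U f \<Longrightarrow> open U \<Longrightarrow> open {z \<in> U. f z \<noteq> (0::complex)}"
proof -
  assume c: "continuous_on U f" and o: "open U"
  have "open (U \<inter> f -` (- {0}))" by (rule continuous_open_preimage[OF c o]) auto
  moreover have "U \<inter> f -` (- {0}) = {z \<in> U. f z \<noteq> 0}" by auto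
  ultimately show ?thesis by simp
qed

lemma zeros_finite:
  assumes g: "good \<phi> U" and rho: "\<rho> > 0" "ball (0::complex \<times> complex) \<rho> \<subseteq> U"
    and nd: "\<not> y_dvd_germ \<phi>"
  shows "finite {x \<in> cball 0 (\<rho>/2). \<phi> (x, 0) = 0}"
proof (rule ccontr)
  assume inf: "infinite {x \<in> cball 0 (\<rho>/2). \<phi> (x, 0) = 0}"
  define Z where "Z = {x \<in> cball 0 (\<rho>/2). \<phi> (x, 0) = 0}"
  have "\<exists>\<xi>\<in>cball 0 (\<rho>/2). \<xi> islimpt Z"
  proof (rule ccontr)
    assume "\<not> (\<exists>\<xi>\<in>cball 0 (\<rho>/2). \<xi> islimpt Z)"
    then have "finite (cball 0 (\<rho>/2) \<inter> Z)"
      by (intro finite_not_islimpt_in_compact) auto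
    moreover have "cball 0 (\<rho>/2) \<inter> Z = Z" by (auto simp: Z_def)
    ultimately show False using inf Z_def by simp
  qed
  then obtain \<xi> where xi: "\<xi> \<in> cball 0 (\<rho>/2)" "\<xi> islimpt Z" by blast
  have sl: "ball 0 \<rho> \<subseteq> {t. (t, 0) \<in> U}"
  proof
    fix t :: complex assume "t \<in> ball 0 \<rho>"
    then have "(t, 0) \<in> ball (0::complex \<times> complex) \<rho>" by (simp add: dist_norm zero_prod_def[symmetric])
    then show "t \<in> {t. (t, 0) \<in> U}" using rho by auto
  qed
  have hol: "(\<lambda>t. \<phi> (t, 0)) holomorphic_on ball 0 \<rho>"
    using good_slice_x_holo[OF g] sl holomorphic_on_subset by blast
  have zero: "\<phi> (w, 0) = 0" if w: "w \<in> ball 0 \<rho>" for w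
  proof (rule analytic_continuation[OF hol open_ball connected_ball, of Z \<xi>])
    show "Z \<subseteq> ball 0 \<rho>" using rho by (auto simp: Z_def)
    show "\<xi> \<in> ball 0 \<rho>" using xi rho by auto
    show "\<xi> islimpt Z" by (rule xi)
    show "\<And>z. z \<in> Z \<Longrightarrow> \<phi> (z, 0) = 0" by (auto simp: Z_def)
    show "w \<in> ball 0 \<rho>" by (rule w)
  qed
  define N where "N = ball (0::complex \<times> complex) \<rho>"
  have gN: "good \<phi> N" unfolding N_def by (rule good_subset[OF g open_ball rho(2)])
  have slN: "(x, 0) \<in> N" if "(x, y) \<in> N" for x y
  proof -
    have "cmod x \<le> norm (x, y)" by (simp add: norm_Pair real_sqrt_sum_squares_ge1)
    moreover have "norm (x, y) < \<rho>" using that by (simp add: N_def mem_ball_0)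
    moreover have "norm (x, 0::complex) = cmod x" by (simp add: norm_Pair)
    ultimately show ?thesis by (simp add: N_def mem_ball_0)
  qed
  have zN: "\<phi> (x, 0) = 0" if "(x, 0) \<in> N" for x
  proof -
    have "cmod x < \<rho>" using that by (simp add: N_def mem_ball_0 norm_Pair)
    then show ?thesis using zero by simp
  qed
  define q where "q = (\<lambda>z. if snd z = 0 then py \<phi> (fst z, 0) else \<phi> z / snd z)"
  have "good q N" unfolding q_def
    by (rule ydiv(1)[of \<phi> N]) (auto intro: gN slN zN)
  have "\<phi> z = snd z * q z" if "z \<in> N" for z unfolding q_def
    by (rule ydiv(2)[of \<phi> N]) (auto intro: gN slN zN that)
  note eqq = this
  have "y_dvd_germ \<phi>" unfolding y_dvd_germ_def
  proof (intro exI conjI)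
    show "\<rho> > 0" by (rule rho(1))
    show "holo2 q (ball 0 \<rho>)" using osgood[OF \<open>good q N\<close>] by (simp add: N_def)
    show "\<forall>z\<in>ball 0 \<rho>. \<phi> z = snd z * q z" using eqq by (simp add: N_def)
  qed
  then show False using nd by simp
qed


locale wb =
  fixes h1 h2 h3 :: "complex \<times> complex \<Rightarrow> complex" and U :: "(complex \<times> complex) set" and b :: nat
  assumes g1: "good h1 U" and g2: "good h2 U" and g3: "good h3 U"
begin

definition "d12 = (\<lambda>z. h1 z - h2 z)"
definition "d23 = (\<lambda>z. h2 z - h3 z)"
definition "d31 = (\<lambda>z. h3 z - h1 z)"
definition "VV = {z \<in> U. snd z \<noteq> 0 \<and> h1 z \<noteq> h2 z \<and> h2 z \<noteq> h3 z \<and> h3 z \<noteq> h1 z}"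
definition "LF1 = (\<lambda>z. d23 z * (snd z ^ Suc b * h1 z))"
definition "LF2 = (\<lambda>z. d31 z * (snd z ^ Suc b * h2 z))"
definition "LF3 = (\<lambda>z. d12 z * (snd z ^ Suc b * h3 z))"
definition "aa1 = (\<lambda>z. (px d23 z - py LF1 z) / d23 z)"
definition "aa2 = (\<lambda>z. (px d31 z - py LF2 z) / d31 z)"
definition "QQ = (\<lambda>z. (aa1 z - aa2 z) / (snd z ^ Suc b * h2 z - snd z ^ Suc b * h1 z))"
definition "PP = (\<lambda>z. aa1 z + QQ z * (snd z ^ Suc b * h1 z))"
definition "KK = (\<lambda>z. px QQ z - py PP z)"
definition "GG = (\<lambda>z. (d12 z * px d23 z - d23 z * px d12 z) / (d12 z * d23 z * d31 z))"
definition WW1 :: form1 where "WW1 = ((\<lambda>z. (snd z) ^ Suc b * h1 z), (\<lambda>z. 1))"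
definition WW2 :: form1 where "WW2 = ((\<lambda>z. (snd z) ^ Suc b * h2 z), (\<lambda>z. 1))"
definition WW3 :: form1 where "WW3 = ((\<lambda>z. (snd z) ^ Suc b * h3 z), (\<lambda>z. 1))"

lemma oU: "open U" using g1 by (rule good_open)

lemma gd12: "good d12 U" unfolding d12_def by (rule good_diff[OF g1 g2])
lemma gd23: "good d23 U" unfolding d23_def by (rule good_diff[OF g2 g3])
lemma gd31: "good d31 U" unfolding d31_def by (rule good_diff[OF g3 g1])

lemma gY: "open N \<Longrightarrow> good (\<lambda>z. snd z ^ Suc b) N"
  by (rule good_pow[OF good_snd])

lemma gF: "good h N \<Longrightarrow> good (\<lambda>z. snd z ^ Suc b * h z) N"
  by (rule good_mult[OF gY[OF good_open]])

lemma gLF1: "good LF1 U" unfolding LF1_def by (rule good_mult[OF gd23 gF[OF g1]])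
lemma gLF2: "good LF2 U" unfolding LF2_def by (rule good_mult[OF gd31 gF[OF g2]])
lemma gLF3: "good LF3 U" unfolding LF3_def by (rule good_mult[OF gd12 gF[OF g3]])

lemma VV_sub: "VV \<subseteq> U" by (auto simp: VV_def)

lemma oVV: "open VV"
proof -
  have c: "continuous_on U snd" "continuous_on U d12" "continuous_on U d23" "continuous_on U d31"
    using good_cont[OF gd12] good_cont[OF gd23] good_cont[OF gd31] by (auto intro: continuous_on_snd)
  have "VV = {z \<in> U. snd z \<noteq> 0} \<inter> {z \<in> U. d12 z \<noteq> 0} \<inter> {z \<in> U. d23 z \<noteq> 0} \<inter> {z \<in> U. d31 z \<noteq> 0}"
    by (auto simp: VV_def d12_def d23_def d31_def)
  moreover have "open ({z \<in> U. snd z \<noteq> 0} \<inter> {z \<in> U. d12 z \<noteq> 0} \<inter> {z \<in> U. d23 z \<noteq> 0} \<inter> {z \<in> U. d31 z \<noteq> 0})"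
    by (intro open_Int open_nonzero[OF _ oU] c)
  ultimately show ?thesis by simp
qed

lemma VV_nz: "z \<in> VV \<Longrightarrow> snd z \<noteq> 0 \<and> d12 z \<noteq> 0 \<and> d23 z \<noteq> 0 \<and> d31 z \<noteq> 0 \<and> snd z ^ Suc b * h2 z - snd z ^ Suc b * h1 z \<noteq> 0"
proof -
  assume z: "z \<in> VV"
  have "snd z ^ Suc b * h2 z - snd z ^ Suc b * h1 z = snd z ^ Suc b * (h2 z - h1 z)"
    by (simp add: right_diff_distrib)
  moreover have "snd z ^ Suc b \<noteq> 0" "h2 z - h1 z \<noteq> 0" using z by (auto simp: VV_def)
  ultimately show ?thesis using z by (auto simp: VV_def d12_def d23_def d31_def)
qed

lemma gV: "good f U \<Longrightarrow> good f VV" using good_subset oVV VV_sub by blast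

lemma gaa1: "good aa1 VV" unfolding aa1_def
  by (intro good_divide good_diff gV good_px good_py gd23 gLF1) (simp add: VV_nz)
lemma gaa2: "good aa2 VV" unfolding aa2_def
  by (intro good_divide good_diff gV good_px good_py gd31 gLF2) (simp add: VV_nz)
lemma gQQ: "good QQ VV" unfolding QQ_def
  by (intro good_divide good_diff gaa1 gaa2 gF gV g1 g2) (use VV_nz in blast)
lemma gPP: "good PP VV" unfolding PP_def
  by (intro good_add good_mult gaa1 gQQ gF gV g1)

lemma pxsum: "z \<in> U \<Longrightarrow> px d23 z + px d31 z + px d12 z = 0"
  unfolding d12_def d23_def d31_def
  using px_diff[OF g2 g3] px_diff[OF g3 g1] px_diff[OF g1 g2] by simp

lemma pysum: "z \<in> U \<Longrightarrow> py LF1 z + py LF2 z + py LF3 z = 0"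
proof -
  assume z: "z \<in> U"
  have "py (\<lambda>z. LF1 z + LF2 z + LF3 z) z = py LF1 z + py LF2 z + py LF3 z"
    using py_add[OF good_add[OF gLF1 gLF2] gLF3 z] py_add[OF gLF1 gLF2 z] by simp
  moreover have "(\<lambda>z. LF1 z + LF2 z + LF3 z) = (\<lambda>z. 0)"
    by (rule ext) (simp add: LF1_def LF2_def LF3_def d12_def d23_def d31_def algebra_simps)
  ultimately show ?thesis by (simp add: py_pair[symmetric, of "\<lambda>z. 0"] py_def)
qed

lemma exist: "web_curvature VV WW1 WW2 WW3 KK"
  unfolding web_curvature_def
proof
  fix p assume p: "p \<in> VV"
  show "\<exists>N l1 l2 l3 eta. open N \<and> p \<in> N \<and> N \<subseteq> VV \<and> holo2 l1 N \<and> holo2 l2 N \<and> holo2 l3 N \<and>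
        holo2 (fst eta) N \<and> holo2 (snd eta) N \<and>
        (\<forall>z\<in>N. l1 z \<noteq> 0 \<and> l2 z \<noteq> 0 \<and> l3 z \<noteq> 0) \<and>
        (\<forall>z\<in>N. fst (scale_form l1 WW1) z + fst (scale_form l2 WW2) z + fst (scale_form l3 WW3) z = 0
              \<and> snd (scale_form l1 WW1) z + snd (scale_form l2 WW2) z + snd (scale_form l3 WW3) z = 0) \<and>
        (\<forall>z\<in>N. ext_d (scale_form l1 WW1) z = wedge eta (scale_form l1 WW1) z
              \<and> ext_d (scale_form l2 WW2) z = wedge eta (scale_form l2 WW2) z
              \<and> ext_d (scale_form l3 WW3) z = wedge eta (scale_form l3 WW3) z) \<and>
        (\<forall>z\<in>N. KK z = ext_d eta z)"
  proof (rule exI[of _ VV], rule exI[of _ d23], rule exI[of _ d31], rule exI[of _ d12], rule exI[of _ "(PP, QQ)"], intro conjI ballI)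
    show "open VV" by (rule oVV)
    show "p \<in> VV" by (rule p)
    show "VV \<subseteq> VV" ..
    show "holo2 d23 VV" by (rule osgood[OF gV[OF gd23]])
    show "holo2 d31 VV" by (rule osgood[OF gV[OF gd31]])
    show "holo2 d12 VV" by (rule osgood[OF gV[OF gd12]])
    show "holo2 (fst (PP, QQ)) VV" "holo2 (snd (PP, QQ)) VV"
      using osgood[OF gPP] osgood[OF gQQ] by simp_all
    fix z assume z: "z \<in> VV"
    then have zU: "z \<in> U" using VV_sub by auto
    show "d23 z \<noteq> 0" "d31 z \<noteq> 0" "d12 z \<noteq> 0" using VV_nz[OF z] by auto
    show "fst (scale_form d23 WW1) z + fst (scale_form d31 WW2) z + fst (scale_form d12 WW3) z = 0"
      "snd (scale_form d23 WW1) z + snd (scale_form d31 WW2) z + snd (scale_form d12 WW3) z = 0"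
      by (simp_all add: scale_form_def WW1_def WW2_def WW3_def d12_def d23_def d31_def algebra_simps)
    show "KK z = ext_d (PP, QQ) z" by (simp add: KK_def ext_d_def)
    have A: "px d23 z - py LF1 z = PP z * (d23 z * 1) - QQ z * (d23 z * (snd z ^ Suc b * h1 z))"
      "px d31 z - py LF2 z = PP z * (d31 z * 1) - QQ z * (d31 z * (snd z ^ Suc b * h2 z))"
      "px d12 z - py LF3 z = PP z * (d12 z * 1) - QQ z * (d12 z * (snd z ^ Suc b * h3 z))"
    proof -
      have nz: "d23 z \<noteq> 0" "d31 z \<noteq> 0" "snd z ^ Suc b * h2 z - snd z ^ Suc b * h1 z \<noteq> 0"
        using VV_nz[OF z] by auto
      have s1: "d23 z + d31 z + d12 z = 0" by (simp add: d12_def d23_def d31_def)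
      have s2: "d23 z * (snd z ^ Suc b * h1 z) + d31 z * (snd z ^ Suc b * h2 z) + d12 z * (snd z ^ Suc b * h3 z) = 0"
        by (simp add: d12_def d23_def d31_def algebra_simps)
      have e: "aa1 z = (px d23 z - py LF1 z) / d23 z" "aa2 z = (px d31 z - py LF2 z) / d31 z"
        "QQ z = (aa1 z - aa2 z) / (snd z ^ Suc b * h2 z - snd z ^ Suc b * h1 z)"
        "PP z = aa1 z + QQ z * (snd z ^ Suc b * h1 z)"
        by (simp_all add: aa1_def aa2_def QQ_def PP_def)
      show "px d23 z - py LF1 z = PP z * (d23 z * 1) - QQ z * (d23 z * (snd z ^ Suc b * h1 z))"
        "px d31 z - py LF2 z = PP z * (d31 z * 1) - QQ z * (d31 z * (snd z ^ Suc b * h2 z))"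
        "px d12 z - py LF3 z = PP z * (d12 z * 1) - QQ z * (d12 z * (snd z ^ Suc b * h3 z))"
        using alg_exist[OF nz s1 s2 pxsum[OF zU] pysum[OF zU] e] by blast+
    qed
    show "ext_d (scale_form d23 WW1) z = wedge (PP, QQ) (scale_form d23 WW1) z"
      "ext_d (scale_form d31 WW2) z = wedge (PP, QQ) (scale_form d31 WW2) z"
      "ext_d (scale_form d12 WW3) z = wedge (PP, QQ) (scale_form d12 WW3) z"
    proof -
      have "ext_d (scale_form d23 WW1) z = px d23 z - py LF1 z"
        "ext_d (scale_form d31 WW2) z = px d31 z - py LF2 z"
        "ext_d (scale_form d12 WW3) z = px d12 z - py LF3 z"
        by (simp_all add: ext_d_def scale_form_def WW1_def WW2_def WW3_def LF1_def LF2_def LF3_def)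
      moreover have "wedge (PP, QQ) (scale_form d23 WW1) z = PP z * (d23 z * 1) - QQ z * (d23 z * (snd z ^ Suc b * h1 z))"
        "wedge (PP, QQ) (scale_form d31 WW2) z = PP z * (d31 z * 1) - QQ z * (d31 z * (snd z ^ Suc b * h2 z))"
        "wedge (PP, QQ) (scale_form d12 WW3) z = PP z * (d12 z * 1) - QQ z * (d12 z * (snd z ^ Suc b * h3 z))"
        by (simp_all add: wedge_def scale_form_def WW1_def WW2_def WW3_def)
      ultimately show "ext_d (scale_form d23 WW1) z = wedge (PP, QQ) (scale_form d23 WW1) z"
        "ext_d (scale_form d31 WW2) z = wedge (PP, QQ) (scale_form d31 WW2) z"
        "ext_d (scale_form d12 WW3) z = wedge (PP, QQ) (scale_form d12 WW3) z"
        using A by simp_all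
    qed
  qed
qed

end


lemma alg_lam:
  fixes s h1 h2 h3 m1 m2 m3 :: complex
  assumes s: "s \<noteq> 0" and h: "h2 - h3 \<noteq> 0"
    and e1: "m1 * (s * h1) + m2 * (s * h2) + m3 * (s * h3) = 0"
    and e2: "m1 * 1 + m2 * 1 + m3 * 1 = 0"
  shows "m1 = m1 / (h2 - h3) * (h2 - h3)" "m2 = m1 / (h2 - h3) * (h3 - h1)" "m3 = m1 / (h2 - h3) * (h1 - h2)"
proof -
  show "m1 = m1 / (h2 - h3) * (h2 - h3)" using h by simp
  have m3: "m3 = - m1 - m2"
  proof -
    have e2': "m1 + m2 + m3 = 0" using e2 by simp
    have "m3 = (m1 + m2 + m3) - m1 - m2" by (simp add: algebra_simps)
    then show ?thesis using e2' by simp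
  qed
  have "s * (m1 * (h1 - h3) + m2 * (h2 - h3)) = 0"
  proof -
    have "s * (m1 * (h1 - h3) + m2 * (h2 - h3)) = m1 * (s * h1) + m2 * (s * h2) + m3 * (s * h3)"
      unfolding m3 by (simp add: algebra_simps)
    then show ?thesis using e1 by simp
  qed
  then have X: "m1 * (h1 - h3) + m2 * (h2 - h3) = 0" using s by simp
  have k: "m2 * (h2 - h3) = m1 * (h3 - h1)"
  proof -
    have "m2 * (h2 - h3) = (m1 * (h1 - h3) + m2 * (h2 - h3)) - m1 * (h1 - h3)" by simp
    then show ?thesis using X by (simp add: algebra_simps)
  qed
  then show m2: "m2 = m1 / (h2 - h3) * (h3 - h1)" using h by (simp add: field_simps)
  show "m3 = m1 / (h2 - h3) * (h1 - h2)"
    unfolding m3 m2 using h by (simp add: field_simps)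
qed

context wb begin

lemma unique:
  assumes wc: "web_curvature VV WW1 WW2 WW3 K" and p: "p \<in> VV"
  shows "K p = KK p"
proof -
  have ex: "\<exists>N l1 l2 l3 eta. open N \<and> p \<in> N \<and> N \<subseteq> VV \<and>
        holo2 l1 N \<and> holo2 l2 N \<and> holo2 l3 N \<and>
        holo2 (fst eta) N \<and> holo2 (snd eta) N \<and>
        (\<forall>z\<in>N. l1 z \<noteq> 0 \<and> l2 z \<noteq> 0 \<and> l3 z \<noteq> 0) \<and>
        (\<forall>z\<in>N. fst (scale_form l1 WW1) z + fst (scale_form l2 WW2) z + fst (scale_form l3 WW3) z = 0
              \<and> snd (scale_form l1 WW1) z + snd (scale_form l2 WW2) z + snd (scale_form l3 WW3) z = 0) \<and>
        (\<forall>z\<in>N. ext_d (scale_form l1 WW1) z = wedge eta (scale_form l1 WW1) z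
              \<and> ext_d (scale_form l2 WW2) z = wedge eta (scale_form l2 WW2) z
              \<and> ext_d (scale_form l3 WW3) z = wedge eta (scale_form l3 WW3) z) \<and>
        (\<forall>z\<in>N. K z = ext_d eta z)"
    by (rule bspec[OF wc[unfolded web_curvature_def] p])
  obtain N l1 l2 l3 eta where H: "open N \<and> p \<in> N \<and> N \<subseteq> VV \<and>
        holo2 l1 N \<and> holo2 l2 N \<and> holo2 l3 N \<and>
        holo2 (fst eta) N \<and> holo2 (snd eta) N \<and>
        (\<forall>z\<in>N. l1 z \<noteq> 0 \<and> l2 z \<noteq> 0 \<and> l3 z \<noteq> 0) \<and>
        (\<forall>z\<in>N. fst (scale_form l1 WW1) z + fst (scale_form l2 WW2) z + fst (scale_form l3 WW3) z = 0
              \<and> snd (scale_form l1 WW1) z + snd (scale_form l2 WW2) z + snd (scale_form l3 WW3) z = 0) \<and>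
        (\<forall>z\<in>N. ext_d (scale_form l1 WW1) z = wedge eta (scale_form l1 WW1) z
              \<and> ext_d (scale_form l2 WW2) z = wedge eta (scale_form l2 WW2) z
              \<and> ext_d (scale_form l3 WW3) z = wedge eta (scale_form l3 WW3) z) \<and>
        (\<forall>z\<in>N. K z = ext_d eta z)"
    using ex by (elim exE) (rule that)
  note oN = H[THEN conjunct1]
  note pN = H[THEN conjunct2, THEN conjunct1]
  note NV = H[THEN conjunct2, THEN conjunct2, THEN conjunct1]
  note hl1 = H[THEN conjunct2, THEN conjunct2, THEN conjunct2, THEN conjunct1]
  note hl2 = H[THEN conjunct2, THEN conjunct2, THEN conjunct2, THEN conjunct2, THEN conjunct1]
  note hl3 = H[THEN conjunct2, THEN conjunct2, THEN conjunct2, THEN conjunct2, THEN conjunct2, THEN conjunct1]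
  note hP = H[THEN conjunct2, THEN conjunct2, THEN conjunct2, THEN conjunct2, THEN conjunct2, THEN conjunct2, THEN conjunct1]
  note hQ = H[THEN conjunct2, THEN conjunct2, THEN conjunct2, THEN conjunct2, THEN conjunct2, THEN conjunct2, THEN conjunct2, THEN conjunct1]
  note nzall = H[THEN conjunct2, THEN conjunct2, THEN conjunct2, THEN conjunct2, THEN conjunct2, THEN conjunct2, THEN conjunct2, THEN conjunct2, THEN conjunct1]
  note sumsall = H[THEN conjunct2, THEN conjunct2, THEN conjunct2, THEN conjunct2, THEN conjunct2, THEN conjunct2, THEN conjunct2, THEN conjunct2, THEN conjunct2, THEN conjunct1]
  note eqsall = H[THEN conjunct2, THEN conjunct2, THEN conjunct2, THEN conjunct2, THEN conjunct2, THEN conjunct2, THEN conjunct2, THEN conjunct2, THEN conjunct2, THEN conjunct2, THEN conjunct1]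
  note Kall = H[THEN conjunct2, THEN conjunct2, THEN conjunct2, THEN conjunct2, THEN conjunct2, THEN conjunct2, THEN conjunct2, THEN conjunct2, THEN conjunct2, THEN conjunct2, THEN conjunct2]
  have nzl: "\<And>z. z \<in> N \<Longrightarrow> l1 z \<noteq> 0" using nzall by blast
  have sums: "\<And>z. z \<in> N \<Longrightarrow> fst (scale_form l1 WW1) z + fst (scale_form l2 WW2) z + fst (scale_form l3 WW3) z = 0
              \<and> snd (scale_form l1 WW1) z + snd (scale_form l2 WW2) z + snd (scale_form l3 WW3) z = 0"
    using sumsall by blast
  have eqs: "\<And>z. z \<in> N \<Longrightarrow> ext_d (scale_form l1 WW1) z = wedge eta (scale_form l1 WW1) z
              \<and> ext_d (scale_form l2 WW2) z = wedge eta (scale_form l2 WW2) z" using eqsall by blast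
  have Kd: "K p = ext_d eta p" using Kall pN by blast
  define P' where "P' = fst eta"
  define Q' where "Q' = snd eta"
  have gN: "good f U \<Longrightarrow> good f N" for f using good_subset[OF _ oN] NV VV_sub by blast
  have gVN: "good f VV \<Longrightarrow> good f N" for f using good_subset[OF _ oN NV] by blast
  have NVz: "z \<in> N \<Longrightarrow> z \<in> VV" for z using NV by auto
  define lam where "lam = (\<lambda>z. l1 z / d23 z)"
  have glam: "good lam N" unfolding lam_def
    by (rule good_divide[OF holo2_good[OF hl1] gN[OF gd23]]) (use VV_nz NVz in blast)
  have lamnz: "lam z \<noteq> 0" if "z \<in> N" for z
    using nzl[OF that] VV_nz[OF NVz[OF that]] by (simp add: lam_def)
  have lrel: "l1 z = lam z * d23 z \<and> l2 z = lam z * d31 z \<and> l3 z = lam z * d12 z" if z: "z \<in> N" for z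
  proof -
    have s: "snd z ^ Suc b \<noteq> 0" and hh: "h2 z - h3 z \<noteq> 0"
      using VV_nz[OF NVz[OF z]] by (auto simp: d23_def)
    have e1: "l1 z * (snd z ^ Suc b * h1 z) + l2 z * (snd z ^ Suc b * h2 z) + l3 z * (snd z ^ Suc b * h3 z) = 0"
      and e2: "l1 z * 1 + l2 z * 1 + l3 z * 1 = 0"
      using sums[OF z] by (simp_all add: scale_form_def WW1_def WW2_def WW3_def)
    note r = alg_lam[OF s hh e1 e2]
    show ?thesis using r by (simp add: lam_def d12_def d23_def d31_def)
  qed
  have PQ: "Q' z = QQ z + py lam z / lam z \<and> P' z = PP z + px lam z / lam z" if z: "z \<in> N" for z
  proof -
    have zV: "z \<in> VV" by (rule NVz[OF z])
    have e1raw: "px l1 z - py (\<lambda>z. l1 z * (snd z ^ Suc b * h1 z)) z =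
        P' z * (l1 z * 1) - Q' z * (l1 z * (snd z ^ Suc b * h1 z))"
      using eqs[OF z] by (simp add: ext_d_def wedge_def scale_form_def WW1_def P'_def Q'_def)
    have e2raw: "px l2 z - py (\<lambda>z. l2 z * (snd z ^ Suc b * h2 z)) z =
        P' z * (l2 z * 1) - Q' z * (l2 z * (snd z ^ Suc b * h2 z))"
      using eqs[OF z] by (simp add: ext_d_def wedge_def scale_form_def WW2_def P'_def Q'_def)
    have c1: "px l1 z = px lam z * d23 z + lam z * px d23 z"
    proof -
      have "px l1 z = px (\<lambda>z. lam z * d23 z) z" by (rule px_cong[OF oN z]) (use lrel in blast)
      also have "\<dots> = px lam z * d23 z + lam z * px d23 z" by (rule px_mult[OF glam gN[OF gd23] z])
      finally show ?thesis .
    qed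
    have c2: "px l2 z = px lam z * d31 z + lam z * px d31 z"
    proof -
      have "px l2 z = px (\<lambda>z. lam z * d31 z) z" by (rule px_cong[OF oN z]) (use lrel in blast)
      also have "\<dots> = px lam z * d31 z + lam z * px d31 z" by (rule px_mult[OF glam gN[OF gd31] z])
      finally show ?thesis .
    qed
    have c3: "py (\<lambda>z. l1 z * (snd z ^ Suc b * h1 z)) z = py lam z * LF1 z + lam z * py LF1 z"
    proof -
      have "py (\<lambda>z. l1 z * (snd z ^ Suc b * h1 z)) z = py (\<lambda>z. lam z * LF1 z) z"
        by (rule py_cong[OF oN z]) (use lrel in \<open>simp add: LF1_def\<close>)
      also have "\<dots> = py lam z * LF1 z + lam z * py LF1 z" by (rule py_mult[OF glam gN[OF gLF1] z])
      finally show ?thesis .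
    qed
    have c4: "py (\<lambda>z. l2 z * (snd z ^ Suc b * h2 z)) z = py lam z * LF2 z + lam z * py LF2 z"
    proof -
      have "py (\<lambda>z. l2 z * (snd z ^ Suc b * h2 z)) z = py (\<lambda>z. lam z * LF2 z) z"
        by (rule py_cong[OF oN z]) (use lrel in \<open>simp add: LF2_def\<close>)
      also have "\<dots> = py lam z * LF2 z + lam z * py LF2 z" by (rule py_mult[OF glam gN[OF gLF2] z])
      finally show ?thesis .
    qed
    have l1e: "l1 z = lam z * d23 z" and l2e: "l2 z = lam z * d31 z" using lrel[OF z] by auto
    have E1: "px lam z * d23 z + lam z * px d23 z - (py lam z * (d23 z * (snd z ^ Suc b * h1 z)) + lam z * py LF1 z)
        = P' z * (lam z * d23 z) - Q' z * (lam z * d23 z * (snd z ^ Suc b * h1 z))"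
      using e1raw unfolding c1 c3 l1e by (simp add: LF1_def mult.assoc)
    have E2: "px lam z * d31 z + lam z * px d31 z - (py lam z * (d31 z * (snd z ^ Suc b * h2 z)) + lam z * py LF2 z)
        = P' z * (lam z * d31 z) - Q' z * (lam z * d31 z * (snd z ^ Suc b * h2 z))"
      using e2raw unfolding c2 c4 l2e by (simp add: LF2_def mult.assoc)
    have nz: "d23 z \<noteq> 0" "d31 z \<noteq> 0" "snd z ^ Suc b * h2 z - snd z ^ Suc b * h1 z \<noteq> 0"
      using VV_nz[OF zV] by auto
    have e: "aa1 z = (px d23 z - py LF1 z) / d23 z" "aa2 z = (px d31 z - py LF2 z) / d31 z"
        "QQ z = (aa1 z - aa2 z) / (snd z ^ Suc b * h2 z - snd z ^ Suc b * h1 z)"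
        "PP z = aa1 z + QQ z * (snd z ^ Suc b * h1 z)"
      by (simp_all add: aa1_def aa2_def QQ_def PP_def)
    show ?thesis using alg_unique[OF nz lamnz[OF z] E1 E2 e] by blast
  qed
  have gQQN: "good QQ N" and gPPN: "good PP N" using gVN gQQ gPP by blast+
  have gpyl: "good (py lam) N" and gpxl: "good (px lam) N" using good_py[OF glam] good_px[OF glam] by blast+
  have "px Q' p = px (\<lambda>z. QQ z + py lam z / lam z) p"
    by (rule px_cong[OF oN pN]) (use PQ in blast)
  also have "\<dots> = px QQ p + px (\<lambda>z. py lam z / lam z) p"
    by (rule px_add[OF gQQN good_divide[OF gpyl glam lamnz] pN])
  also have "px (\<lambda>z. py lam z / lam z) p = (px (py lam) p * lam p - py lam p * px lam p) / (lam p)^2"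
    by (rule px_divide[OF gpyl glam pN lamnz[OF pN]])
  finally have X: "px Q' p = px QQ p + (px (py lam) p * lam p - py lam p * px lam p) / (lam p)^2" .
  have "py P' p = py (\<lambda>z. PP z + px lam z / lam z) p"
    by (rule py_cong[OF oN pN]) (use PQ in blast)
  also have "\<dots> = py PP p + py (\<lambda>z. px lam z / lam z) p"
    by (rule py_add[OF gPPN good_divide[OF gpxl glam lamnz] pN])
  also have "py (\<lambda>z. px lam z / lam z) p = (py (px lam) p * lam p - px lam p * py lam p) / (lam p)^2"
    by (rule py_divide[OF gpxl glam pN lamnz[OF pN]])
  finally have Y: "py P' p = py PP p + (py (px lam) p * lam p - px lam p * py lam p) / (lam p)^2" .
  have M: "py (px lam) p = px (py lam) p" by (rule mixed[OF glam pN])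
  have "K p = px Q' p - py P' p" using Kd by (simp add: ext_d_def P'_def Q'_def)
  also have "\<dots> = px QQ p - py PP p" unfolding X Y M by (simp add: algebra_simps)
  also have "\<dots> = KK p" by (simp add: KK_def)
  finally show ?thesis .
qed

end


context wb begin

lemma gGG: "open W \<Longrightarrow> W \<subseteq> U \<Longrightarrow> (\<forall>z\<in>W. d12 z \<noteq> 0 \<and> d23 z \<noteq> 0 \<and> d31 z \<noteq> 0) \<Longrightarrow> good GG W"
proof -
  assume oW: "open W" and WU: "W \<subseteq> U" and nz: "\<forall>z\<in>W. d12 z \<noteq> 0 \<and> d23 z \<noteq> 0 \<and> d31 z \<noteq> 0"
  have gW: "good f U \<Longrightarrow> good f W" for f using good_subset[OF _ oW WU] .
  show ?thesis unfolding GG_def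
    by (rule good_divide[OF good_diff[OF good_mult[OF gW[OF gd12] gW[OF good_px[OF gd23]]]
          good_mult[OF gW[OF gd23] gW[OF good_px[OF gd12]]]]
          good_mult[OF good_mult[OF gW[OF gd12] gW[OF gd23]] gW[OF gd31]]]) (use nz in auto)
qed

lemma decomp:
  assumes oW: "open W" and WU: "W \<subseteq> U" and nzW: "\<forall>z\<in>W. d12 z \<noteq> 0 \<and> d23 z \<noteq> 0 \<and> d31 z \<noteq> 0"
  shows "\<exists>H. good H W \<and> (\<forall>z\<in>W \<inter> VV. KK z = px GG z / snd z ^ Suc b + H z)"
proof -
  have gW: "good f U \<Longrightarrow> good f W" for f using good_subset[OF _ oW WU] .
  define AA where "AA = (\<lambda>z. (px d23 z / d23 z - px d31 z / d31 z) / d12 z)"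
  define BB where "BB = (\<lambda>z. (h1 z * py d23 z / d23 z - h2 z * py d31 z / d31 z + (py h1 z - py h2 z)) / d12 z)"
  define PT where "PT = (\<lambda>z. px d23 z / d23 z - snd z ^ Suc b * h1 z * py d23 z / d23 z - snd z ^ Suc b * py h1 z
      - h1 z * AA z + snd z ^ Suc b * h1 z * BB z)"
  define HH where "HH = (\<lambda>z. px BB z - py PT z)"
  have n12: "\<And>z. z \<in> W \<Longrightarrow> d12 z \<noteq> 0" and n23: "\<And>z. z \<in> W \<Longrightarrow> d23 z \<noteq> 0"
    and n31: "\<And>z. z \<in> W \<Longrightarrow> d31 z \<noteq> 0" using nzW by auto
  have gAA: "good AA W" unfolding AA_def
    by (rule good_divide[OF good_diff[OF good_divide[OF gW[OF good_px[OF gd23]] gW[OF gd23] n23]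
          good_divide[OF gW[OF good_px[OF gd31]] gW[OF gd31] n31]] gW[OF gd12] n12])
  have gBB: "good BB W" unfolding BB_def
    by (rule good_divide[OF good_add[OF good_diff[OF good_divide[OF good_mult[OF gW[OF g1] gW[OF good_py[OF gd23]]] gW[OF gd23] n23]
          good_divide[OF good_mult[OF gW[OF g2] gW[OF good_py[OF gd31]]] gW[OF gd31] n31]]
          good_diff[OF gW[OF good_py[OF g1]] gW[OF good_py[OF g2]]]] gW[OF gd12] n12])
  have gYW: "good (\<lambda>z. snd z ^ Suc b) W" by (rule gY[OF oW])
  have gPT: "good PT W" unfolding PT_def
    by (rule good_add[OF good_diff[OF good_diff[OF good_diff[OF
          good_divide[OF gW[OF good_px[OF gd23]] gW[OF gd23] n23]
          good_divide[OF good_mult[OF good_mult[OF gYW gW[OF g1]] gW[OF good_py[OF gd23]]] gW[OF gd23] n23]]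
          good_mult[OF gYW gW[OF good_py[OF g1]]]]
          good_mult[OF gW[OF g1] gAA]]
          good_mult[OF good_mult[OF gYW gW[OF g1]] gBB]])
  have gHH: "good HH W" unfolding HH_def by (rule good_diff[OF good_px[OF gBB] good_py[OF gPT]])
  define WV where "WV = W \<inter> VV"
  have oWV: "open WV" unfolding WV_def by (rule open_Int[OF oW oVV])
  have WVsub: "WV \<subseteq> W" by (auto simp: WV_def)
  have gWV: "good f W \<Longrightarrow> good f WV" for f using good_subset[OF _ oWV WVsub] .
  have WVnz: "\<And>w. w \<in> WV \<Longrightarrow> snd w \<noteq> 0" using VV_nz by (auto simp: WV_def)
  have WVU: "\<And>w. w \<in> WV \<Longrightarrow> w \<in> U" using WU by (auto simp: WV_def)
  have QP: "QQ w = BB w + (of_nat (Suc b) / snd w - AA w * (1 / snd w ^ Suc b)) \<and> PP w = PT w" if w: "w \<in> WV" for w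
  proof -
    have wU: "w \<in> U" by (rule WVU[OF w])
    have wV: "w \<in> VV" using w by (simp add: WV_def)
    have Y: "snd w \<noteq> 0" by (rule WVnz[OF w])
    have l1: "d23 w \<noteq> 0" and l2: "d31 w \<noteq> 0" and h: "h1 w - h2 w \<noteq> 0"
      using VV_nz[OF wV] by (auto simp: d12_def)
    have pyF: "py (\<lambda>z. snd z ^ Suc b * h z) w = of_nat (Suc b) * snd w ^ b * h w + snd w ^ Suc b * py h w"
      if gh: "good h U" for h
      using py_mult[OF gY[OF oU] gh wU] py_ypow[of b w] by simp
    have q1: "py LF1 w = py d23 w * (snd w ^ Suc b * h1 w) + d23 w * (of_nat (Suc b) * snd w ^ b * h1 w + snd w ^ Suc b * py h1 w)"
      unfolding LF1_def using py_mult[OF gd23 gF[OF g1] wU] pyF[OF g1] by simp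
    have q2: "py LF2 w = py d31 w * (snd w ^ Suc b * h2 w) + d31 w * (of_nat (Suc b) * snd w ^ b * h2 w + snd w ^ Suc b * py h2 w)"
      unfolding LF2_def using py_mult[OF gd31 gF[OF g2] wU] pyF[OF g2] by simp
    have e: "aa1 w = (px d23 w - py LF1 w) / d23 w" "aa2 w = (px d31 w - py LF2 w) / d31 w"
        "QQ w = (aa1 w - aa2 w) / (snd w ^ Suc b * h2 w - snd w ^ Suc b * h1 w)"
        "PP w = aa1 w + QQ w * (snd w ^ Suc b * h1 w)"
        "AA w = (px d23 w / d23 w - px d31 w / d31 w) / (h1 w - h2 w)"
        "BB w = (h1 w * py d23 w / d23 w - h2 w * py d31 w / d31 w + (py h1 w - py h2 w)) / (h1 w - h2 w)"
      by (simp_all add: aa1_def aa2_def QQ_def PP_def AA_def BB_def d12_def)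
    note r = alg_decomp[OF Y l1 l2 h q1 q2 e]
    show ?thesis using r by (simp add: PT_def)
  qed
  have AG: "AA w = - GG w" if w: "w \<in> W" for w
  proof -
    have wU: "w \<in> U" using w WU by auto
    have "px d12 w + px d23 w + px d31 w = 0" using pxsum[OF wU] by (simp add: algebra_simps)
    moreover have "d12 w + d23 w + d31 w = 0" by (simp add: d12_def d23_def d31_def)
    ultimately show ?thesis unfolding AA_def GG_def
      using alg_AG[of "d12 w" "d23 w" "d31 w" "px d12 w" "px d23 w" "px d31 w"] n12[OF w] n23[OF w] n31[OF w]
      by simp
  qed
  have gG: "good GG W" by (rule gGG[OF oW WU nzW])
  show ?thesis
  proof (intro exI conjI ballI)
    show "good HH W" by (rule gHH)
    fix z assume z: "z \<in> W \<inter> VV"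
    then have zWV: "z \<in> WV" and zW: "z \<in> W" by (simp_all add: WV_def)
    have Yz: "snd z \<noteq> 0" by (rule WVnz[OF zWV])
    have gc: "good (\<lambda>w. of_nat (Suc b) / snd w) WV"
      by (rule good_divide[OF good_const[OF oWV] good_snd[OF oWV]]) (use WVnz in blast)
    have gi: "good (\<lambda>w. 1 / snd w ^ Suc b) WV"
      by (rule good_divide[OF good_const[OF oWV] gY[OF oWV]]) (use WVnz in simp)
    have pAA: "px AA z = - px GG z"
    proof -
      have "px AA z = px (\<lambda>w. - GG w) z" by (rule px_cong[OF oW zW]) (use AG in blast)
      also have "\<dots> = - px GG z" by (rule px_minus[OF gG zW])
      finally show ?thesis .
    qed
    have "px QQ z = px (\<lambda>w. BB w + (of_nat (Suc b) / snd w - AA w * (1 / snd w ^ Suc b))) z"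
      by (rule px_cong[OF oWV zWV]) (use QP in blast)
    also have "\<dots> = px BB z + px (\<lambda>w. of_nat (Suc b) / snd w - AA w * (1 / snd w ^ Suc b)) z"
      by (rule px_add[OF gWV[OF gBB] good_diff[OF gc good_mult[OF gWV[OF gAA] gi]] zWV])
    also have "px (\<lambda>w. of_nat (Suc b) / snd w - AA w * (1 / snd w ^ Suc b)) z
        = px (\<lambda>w. of_nat (Suc b) / snd w) z - px (\<lambda>w. AA w * (1 / snd w ^ Suc b)) z"
      by (rule px_diff[OF gc good_mult[OF gWV[OF gAA] gi] zWV])
    also have "px (\<lambda>w. AA w * (1 / snd w ^ Suc b)) z = px AA z * (1 / snd z ^ Suc b) + AA z * px (\<lambda>w. 1 / snd w ^ Suc b) z"
      by (rule px_mult[OF gWV[OF gAA] gi zWV])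
    also have "px (\<lambda>w. 1 / snd w ^ Suc b) z = 0"
      using px_ydep[of "\<lambda>y. 1 / y ^ Suc b" z] by simp
    also have "px (\<lambda>w. of_nat (Suc b) / snd w) z = 0"
      using px_ydep[of "\<lambda>y. of_nat (Suc b) / y" z] by simp
    finally have pQ: "px QQ z = px BB z - px AA z * (1 / snd z ^ Suc b)" by simp
    have pP: "py PP z = py PT z" by (rule py_cong[OF oWV zWV]) (use QP in blast)
    have "KK z = px QQ z - py PP z" by (simp add: KK_def)
    also have "\<dots> = px GG z / snd z ^ Suc b + HH z"
      unfolding pQ pP pAA HH_def by (simp add: algebra_simps)
    finally show "KK z = px GG z / snd z ^ Suc b + HH z" .
  qed
qed

end


context wb begin

lemma goodset:
  assumes U0: "0 \<in> U" and nd: "\<not> y_dvd_germ d12" "\<not> y_dvd_germ d23" "\<not> y_dvd_germ d31"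
  shows "\<exists>r0>0. \<exists>S0. finite S0 \<and> (\<forall>x0. cmod x0 < r0 \<and> x0 \<notin> S0 \<longrightarrow>
     (\<exists>e>0. ball (x0, 0) e \<subseteq> U \<and> (\<forall>z\<in>ball (x0, 0) e. d12 z \<noteq> 0 \<and> d23 z \<noteq> 0 \<and> d31 z \<noteq> 0)))"
proof -
  obtain \<rho> where rho: "\<rho> > 0" "ball 0 \<rho> \<subseteq> U" using oU U0 open_contains_ball by blast
  define S0 where "S0 = {x \<in> cball 0 (\<rho>/2). d12 (x, 0) = 0} \<union> {x \<in> cball 0 (\<rho>/2). d23 (x, 0) = 0}
     \<union> {x \<in> cball 0 (\<rho>/2). d31 (x, 0) = 0}"
  have fin: "finite S0" unfolding S0_def
    using zeros_finite[OF gd12 rho nd(1)] zeros_finite[OF gd23 rho nd(2)] zeros_finite[OF gd31 rho nd(3)]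
    by blast
  define Ogd where "Ogd = {z \<in> U. d12 z \<noteq> 0} \<inter> {z \<in> U. d23 z \<noteq> 0} \<inter> {z \<in> U. d31 z \<noteq> 0}"
  have oO: "open Ogd" unfolding Ogd_def
    by (intro open_Int open_nonzero[OF _ oU] good_cont gd12 gd23 gd31)
  show ?thesis
  proof (rule exI[of _ "\<rho> / 2"], rule conjI[OF _ exI[of _ S0]], rule_tac [2] conjI[OF fin], rule_tac [2] allI, rule_tac [2] impI)
    show "\<rho> / 2 > 0" using rho by simp
    fix x0 assume x0: "cmod x0 < \<rho> / 2 \<and> x0 \<notin> S0"
    have xc: "x0 \<in> cball 0 (\<rho>/2)" using x0 by simp
    have "(x0, 0) \<in> ball (0::complex \<times> complex) \<rho>"
      using x0 rho by (simp add: mem_ball_0 norm_Pair)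
    then have x0U: "(x0, 0) \<in> U" using rho by auto
    have "(x0, 0) \<in> Ogd" using x0 xc x0U unfolding Ogd_def S0_def by auto
    then obtain e where e: "e > 0" "ball (x0, 0) e \<subseteq> Ogd" using oO open_contains_ball by blast
    show "\<exists>e>0. ball (x0, 0) e \<subseteq> U \<and> (\<forall>z\<in>ball (x0, 0) e. d12 z \<noteq> 0 \<and> d23 z \<noteq> 0 \<and> d31 z \<noteq> 0)"
      using e unfolding Ogd_def by blast
  qed
qed

lemma final:
  assumes U0: "0 \<in> U" and nd: "\<not> y_dvd_germ d12" "\<not> y_dvd_germ d23" "\<not> y_dvd_germ d31"
  shows "(\<exists>K. web_curvature VV WW1 WW2 WW3 K) \<and>
         (\<forall>K. web_curvature VV WW1 WW2 WW3 K \<longrightarrow>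
            (holo_along_y0 VV K \<longleftrightarrow> ypow_dvd_along_y0 (Suc b) VV (px GG)))"
proof (intro conjI allI impI)
  show "\<exists>K. web_curvature VV WW1 WW2 WW3 K" using exist by blast
  fix K assume wc: "web_curvature VV WW1 WW2 WW3 K"
  have KK: "\<And>z. z \<in> VV \<Longrightarrow> K z = KK z" using unique[OF wc] by blast
  obtain r0 S0 where r0: "r0 > 0" "finite S0" and GS: "\<And>x0. cmod x0 < r0 \<Longrightarrow> x0 \<notin> S0 \<Longrightarrow>
     (\<exists>e>0. ball (x0, 0) e \<subseteq> U \<and> (\<forall>z\<in>ball (x0, 0) e. d12 z \<noteq> 0 \<and> d23 z \<noteq> 0 \<and> d31 z \<noteq> 0))"
    using goodset[OF U0 nd] by blast
  have dec: "\<exists>e>0. \<exists>H. good H (ball (x0, 0) e) \<and>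
      (\<forall>z\<in>ball (x0, 0) e \<inter> VV. K z = px GG z / snd z ^ Suc b + H z)"
    if x0a: "cmod x0 < r0" "x0 \<notin> S0" for x0
  proof -
    obtain e where e: "e > 0" "ball (x0, 0) e \<subseteq> U" "\<forall>z\<in>ball (x0, 0) e. d12 z \<noteq> 0 \<and> d23 z \<noteq> 0 \<and> d31 z \<noteq> 0"
      using GS[OF x0a] by blast
    obtain H where H: "good H (ball (x0, 0) e)" "\<forall>z\<in>ball (x0, 0) e \<inter> VV. KK z = px GG z / snd z ^ Suc b + H z"
      using decomp[OF open_ball e(2) e(3)] by blast
    show ?thesis using e(1) H KK by (intro exI[of _ e] exI[of _ H]) auto
  qed
  have shrink: "good g (ball c e) \<Longrightarrow> e' \<le> e \<Longrightarrow> good g (ball c e')" for g c e e'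
    by (rule good_subset[OF _ open_ball]) auto
  show "holo_along_y0 VV K \<longleftrightarrow> ypow_dvd_along_y0 (Suc b) VV (px GG)"
  proof
    assume "holo_along_y0 VV K"
    then obtain r S where rS: "r > 0" "finite S" and hol: "\<And>x0. cmod x0 < r \<Longrightarrow> x0 \<notin> S \<Longrightarrow>
      (\<exists>e>0. \<exists>g. holo2 g (ball (x0, 0) e) \<and> (\<forall>z\<in>ball (x0, 0) e \<inter> VV. K z = g z))"
      unfolding holo_along_y0_def by blast
    show "ypow_dvd_along_y0 (Suc b) VV (px GG)" unfolding ypow_dvd_along_y0_def
    proof (rule exI[of _ "min r r0"], rule conjI[OF _ exI[of _ "S \<union> S0"]], rule_tac [2] conjI, rule_tac [3] allI, rule_tac [3] impI)
      show "min r r0 > 0" using rS r0 by simp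
      show "finite (S \<union> S0)" using rS r0 by simp
      fix x0 assume x0: "cmod x0 < min r r0 \<and> x0 \<notin> S \<union> S0"
      obtain e1 g where e1: "e1 > 0" "holo2 g (ball (x0, 0) e1)" "\<forall>z\<in>ball (x0, 0) e1 \<inter> VV. K z = g z"
        using hol[of x0] x0 by auto
      obtain e2 H where e2: "e2 > 0" "good H (ball (x0, 0) e2)"
        "\<forall>z\<in>ball (x0, 0) e2 \<inter> VV. K z = px GG z / snd z ^ Suc b + H z"
        using dec[of x0] x0 by auto
      define e where "e = min e1 e2"
      have gg: "good (\<lambda>z. g z - H z) (ball (x0, 0) e)"
        by (rule good_diff[OF shrink[OF holo2_good[OF e1(2)]] shrink[OF e2(2)]]) (auto simp: e_def)
      show "\<exists>e>0. \<exists>g. holo2 g (ball (x0, 0) e) \<and> (\<forall>z\<in>ball (x0, 0) e \<inter> VV. px GG z = snd z ^ Suc b * g z)"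
      proof (intro exI[of _ e] exI[of _ "\<lambda>z. g z - H z"] conjI ballI)
        show "e > 0" using e1 e2 by (simp add: e_def)
        show "holo2 (\<lambda>z. g z - H z) (ball (x0, 0) e)" by (rule osgood[OF gg])
        fix z assume z: "z \<in> ball (x0, 0) e \<inter> VV"
        have Y: "snd z ^ Suc b \<noteq> 0" using z VV_nz by auto
        have zb1: "z \<in> ball (x0, 0) e1 \<inter> VV" and zb2: "z \<in> ball (x0, 0) e2 \<inter> VV" using z by (auto simp: e_def)
        have "g z = px GG z / snd z ^ Suc b + H z" using bspec[OF e1(3) zb1] bspec[OF e2(3) zb2] by simp
        then show "px GG z = snd z ^ Suc b * (g z - H z)" using Y by (simp add: field_simps)
      qed
    qed
  next
    assume "ypow_dvd_along_y0 (Suc b) VV (px GG)"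
    then obtain r S where rS: "r > 0" "finite S" and dv: "\<And>x0. cmod x0 < r \<Longrightarrow> x0 \<notin> S \<Longrightarrow>
      (\<exists>e>0. \<exists>g. holo2 g (ball (x0, 0) e) \<and> (\<forall>z\<in>ball (x0, 0) e \<inter> VV. px GG z = snd z ^ Suc b * g z))"
      unfolding ypow_dvd_along_y0_def by blast
    show "holo_along_y0 VV K" unfolding holo_along_y0_def
    proof (rule exI[of _ "min r r0"], rule conjI[OF _ exI[of _ "S \<union> S0"]], rule_tac [2] conjI, rule_tac [3] allI, rule_tac [3] impI)
      show "min r r0 > 0" using rS r0 by simp
      show "finite (S \<union> S0)" using rS r0 by simp
      fix x0 assume x0: "cmod x0 < min r r0 \<and> x0 \<notin> S \<union> S0"
      obtain e1 g where e1: "e1 > 0" "holo2 g (ball (x0, 0) e1)" "\<forall>z\<in>ball (x0, 0) e1 \<inter> VV. px GG z = snd z ^ Suc b * g z"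
        using dv[of x0] x0 by auto
      obtain e2 H where e2: "e2 > 0" "good H (ball (x0, 0) e2)"
        "\<forall>z\<in>ball (x0, 0) e2 \<inter> VV. K z = px GG z / snd z ^ Suc b + H z"
        using dec[of x0] x0 by auto
      define e where "e = min e1 e2"
      have gg: "good (\<lambda>z. g z + H z) (ball (x0, 0) e)"
        by (rule good_add[OF shrink[OF holo2_good[OF e1(2)]] shrink[OF e2(2)]]) (auto simp: e_def)
      show "\<exists>e>0. \<exists>g. holo2 g (ball (x0, 0) e) \<and> (\<forall>z\<in>ball (x0, 0) e \<inter> VV. K z = g z)"
      proof (intro exI[of _ e] exI[of _ "\<lambda>z. g z + H z"] conjI ballI)
        show "e > 0" using e1 e2 by (simp add: e_def)
        show "holo2 (\<lambda>z. g z + H z) (ball (x0, 0) e)" by (rule osgood[OF gg])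
        fix z assume z: "z \<in> ball (x0, 0) e \<inter> VV"
        have Y: "snd z ^ Suc b \<noteq> 0" using z VV_nz by auto
        have zb1: "z \<in> ball (x0, 0) e1 \<inter> VV" and zb2: "z \<in> ball (x0, 0) e2 \<inter> VV" using z by (auto simp: e_def)
        have "K z = px GG z / snd z ^ Suc b + H z" "px GG z = snd z ^ Suc b * g z"
          using bspec[OF e1(3) zb1] bspec[OF e2(3) zb2] by simp_all
        then show "K z = g z + H z" using Y by simp
      qed
    qed
  qed
qed

end

theorem mainTheorem7:
  fixes h1 h2 h3 :: "complex \<times> complex \<Rightarrow> complex" and U :: "(complex \<times> complex) set"
    and a :: nat
  assumes U: "open U" "0 \<in> U"
    and holo: "holo2 h1 U" "holo2 h2 U" "holo2 h3 U"
    and a: "a > 0"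
    and ndvd: "\<not> y_dvd_germ (\<lambda>z. h1 z - h2 z)" "\<not> y_dvd_germ (\<lambda>z. h2 z - h3 z)"
              "\<not> y_dvd_germ (\<lambda>z. h3 z - h1 z)"
  defines "w1 \<equiv> ((\<lambda>z. (snd z) ^ a * h1 z), (\<lambda>z. 1)) :: form1"
    and "w2 \<equiv> ((\<lambda>z. (snd z) ^ a * h2 z), (\<lambda>z. 1)) :: form1"
    and "w3 \<equiv> ((\<lambda>z. (snd z) ^ a * h3 z), (\<lambda>z. 1)) :: form1"
    and "h12 \<equiv> (\<lambda>z. h1 z - h2 z)" and "h23 \<equiv> (\<lambda>z. h2 z - h3 z)" and "h31 \<equiv> (\<lambda>z. h3 z - h1 z)"
    and "V \<equiv> {z \<in> U. snd z \<noteq> 0 \<and> h1 z \<noteq> h2 z \<and> h2 z \<noteq> h3 z \<and> h3 z \<noteq> h1 z}"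
  shows "(\<exists>K. web_curvature V w1 w2 w3 K) \<and>
         (\<forall>K. web_curvature V w1 w2 w3 K \<longrightarrow>
            (holo_along_y0 V K \<longleftrightarrow>
             ypow_dvd_along_y0 a V
               (px (\<lambda>z. (h12 z * px h23 z - h23 z * px h12 z) / (h12 z * h23 z * h31 z)))))"
proof -
  obtain b where ab: "a = Suc b" using a by (cases a) auto
  interpret W: wb h1 h2 h3 U b
    by unfold_locales (intro holo2_good holo)+
  have e1: "w1 = W.WW1" "w2 = W.WW2" "w3 = W.WW3" by (simp_all add: w1_def w2_def w3_def W.WW1_def W.WW2_def W.WW3_def ab)
  have e2: "V = W.VV" by (simp add: V_def W.VV_def)
  have e3: "(\<lambda>z. (h12 z * px h23 z - h23 z * px h12 z) / (h12 z * h23 z * h31 z)) = W.GG"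
    by (simp add: W.GG_def W.d12_def W.d23_def W.d31_def h12_def h23_def h31_def)
  have nd: "\<not> y_dvd_germ W.d12" "\<not> y_dvd_germ W.d23" "\<not> y_dvd_germ W.d31"
    using ndvd by (simp_all add: W.d12_def W.d23_def W.d31_def)
  show ?thesis unfolding e1 e2 e3 ab using W.final[OF U(2) nd] .
qed


end
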